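(* Let $\epsilon\in\,]0,1[$. Let $\widetilde{X}:\lambda\to\square^{op}\mathbf{Set}$ be a transfinite tower (i.e. a colimit-preserving tower indexed by an ordinal $\lambda$) of precubical sets such that each map $\widetilde{X}_\nu\to \widetilde{X}_{\nu+1}$ is a pushout of the map of precubical sets $\partial\square[n_\nu]\subset \square[n_\nu]$ for some $n_\nu\geqslant 0$. Let $\nu$ be a limit ordinal with $\nu\leqslant \lambda$. Then the canonical continuous map \[ \Phi_\nu:\varinjlim_{\mu<\nu} \mathcal{P}^-(\widetilde{X}_\mu,\epsilon) \longrightarrow \mathcal{P}^-(\widetilde{X}_\nu,\epsilon) \] is a homeomorphism.
   Context: ${\mathbf{Top}}$ denotes the category of $\Delta$-generated spaces, with internal hom $\mathbf{TOP}(-,-)$. $\square^{op}\mathbf{Set}$ is the category of precubical sets, $\square[n]$ the $n$-cube and $\partial\square[n]$ its boundary (cubes of dimension $\leqslant n-1$). For a precubical set $K$, $|K|_{geom}$ is its geometric realization and each $n$-cube $c$ induces $|c|_{geom}:[0,1]^n\to|K|_{geom}$. The initial vertex of an $n$-cube $c$ is $c^-=\partial_1^0\cdots\partial_n^0c$, and $\mathcal{C}^-_\alpha(K)=\{c\in K\mid\dim(c)\geqslant1,\ c^-=\alpha\}$. For $n\geqslant1$, $N_n(\epsilon)$ is the set of natural directed paths $\phi:[0,\epsilon]\to[0,1]^n$ (non-decreasing in each coordinate, sum of coordinates equal to $t$ at time $t$), with the $\Delta$-kelleyfication of the relative topology from $\mathbf{TOP}([0,\epsilon],[0,1]^n)$.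 The homotopy branching space is $\mathcal{P}^-(K,\epsilon)=\coprod_{\alpha\in K_0}\mathcal{P}^-_\alpha(K,\epsilon)$ where $\mathcal{P}^-_\alpha(K,\epsilon)=\{|c|_{geom}\phi\mid c\in\mathcal{C}^-_\alpha(K),\ \phi\in N_{\dim(c)}(\epsilon)\}$ has the $\Delta$-kelleyfication of the relative topology from $\mathbf{TOP}([0,\epsilon],|K|_{geom})$. *)

theory Defs
  imports "HOL-Analysis.Analysis" "HOL-Homology.Homology"
begin

text \<open>A precubical set is given by a set of cells X, a dimension function and face
  maps d i a (1 <= i <= dm c, a in {False = 0, True = 1}), satisfying the cubical
  identities d i a (d j b c) = d (j-1) b (d i a c) for i < j.\<close>

definition precubical :: "'c set \<Rightarrow> ('c \<Rightarrow> nat) \<Rightarrow> (nat \<Rightarrow> bool \<Rightarrow> 'c \<Rightarrow> 'c) \<Rightarrow> bool" where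
  "precubical X dm d \<longleftrightarrow>
     (\<forall>c\<in>X. \<forall>i a. 1 \<le> i \<and> i \<le> dm c \<longrightarrow> d i a c \<in> X \<and> dm (d i a c) = dm c - 1) \<and>
     (\<forall>c\<in>X. \<forall>i j a b. 1 \<le> i \<and> i < j \<and> j \<le> dm c \<longrightarrow>
         d i a (d j b c) = d (j - 1) b (d i a c))"

fun lowf :: "(nat \<Rightarrow> bool \<Rightarrow> 'c \<Rightarrow> 'c) \<Rightarrow> nat \<Rightarrow> 'c \<Rightarrow> 'c" where
  "lowf d 0 c = c"
| "lowf d (Suc k) c = lowf d k (d (Suc k) False c)"

definition init_vertex :: "('c \<Rightarrow> nat) \<Rightarrow> (nat \<Rightarrow> bool \<Rightarrow> 'c \<Rightarrow> 'c) \<Rightarrow> 'c \<Rightarrow> 'c" where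
  "init_vertex dm d c = lowf d (dm c) c"

definition cells_from :: "'c set \<Rightarrow> ('c \<Rightarrow> nat) \<Rightarrow> (nat \<Rightarrow> bool \<Rightarrow> 'c \<Rightarrow> 'c) \<Rightarrow> 'c \<Rightarrow> 'c set" where
  "cells_from X dm d \<alpha> = {c \<in> X. 1 \<le> dm c \<and> init_vertex dm d c = \<alpha>}"

text \<open>[0,1]^n as functions nat => real with coordinates 1..n, zero elsewhere.\<close>
definition cube :: "nat \<Rightarrow> (nat \<Rightarrow> real) set" where
  "cube n = {x. (\<forall>i. 1 \<le> i \<and> i \<le> n \<longrightarrow> 0 \<le> x i \<and> x i \<le> 1) \<and> (\<forall>i. (i = 0 \<or> n < i) \<longrightarrow> x i = 0)}"

definition cube_top :: "nat \<Rightarrow> (nat \<Rightarrow> real) topology" where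
  "cube_top n = subtopology (powertop_real UNIV) (cube n)"

definition coface :: "nat \<Rightarrow> bool \<Rightarrow> (nat \<Rightarrow> real) \<Rightarrow> (nat \<Rightarrow> real)" where
  "coface i a x = (\<lambda>j. if j < i then x j else if j = i then (if a then 1 else 0) else x (j - 1))"

definition glue :: "'c set \<Rightarrow> ('c \<Rightarrow> nat) \<Rightarrow> (nat \<Rightarrow> bool \<Rightarrow> 'c \<Rightarrow> 'c)
    \<Rightarrow> ('c \<times> (nat \<Rightarrow> real)) \<Rightarrow> ('c \<times> (nat \<Rightarrow> real)) \<Rightarrow> bool" where
  "glue K dm d p q \<longleftrightarrow> (\<exists>c i a x. c \<in> K \<and> 1 \<le> i \<and> i \<le> dm c \<and> x \<in> cube (dm c - 1) \<and>
       p = (d i a c, x) \<and> q = (c, coface i a x))"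

definition geo_pt :: "'c set \<Rightarrow> ('c \<Rightarrow> nat) \<Rightarrow> (nat \<Rightarrow> bool \<Rightarrow> 'c \<Rightarrow> 'c)
    \<Rightarrow> 'c \<Rightarrow> (nat \<Rightarrow> real) \<Rightarrow> ('c \<times> (nat \<Rightarrow> real)) set" where
  "geo_pt K dm d c x = {q. equivclp (glue K dm d) (c, x) q}"

definition realization :: "'c set \<Rightarrow> 'c set \<Rightarrow> ('c \<Rightarrow> nat) \<Rightarrow> (nat \<Rightarrow> bool \<Rightarrow> 'c \<Rightarrow> 'c)
    \<Rightarrow> ('c \<times> (nat \<Rightarrow> real)) set topology" where
  "realization K X dm d = topology (\<lambda>U.
      U \<subseteq> {geo_pt K dm d c x | c x. c \<in> X \<and> x \<in> cube (dm c)} \<and>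
      (\<forall>c\<in>X. openin (cube_top (dm c)) {x \<in> cube (dm c). geo_pt K dm d c x \<in> U}))"

definition simplex_top :: "nat \<Rightarrow> (nat \<Rightarrow> real) topology" where
  "simplex_top n = subtopology (powertop_real UNIV) (standard_simplex n)"

definition kdelta :: "'a topology \<Rightarrow> 'a topology" where
  "kdelta T = topology (\<lambda>U. U \<subseteq> topspace T \<and>
     (\<forall>n f. continuous_map (simplex_top n) T f \<longrightarrow>
        openin (simplex_top n) {x \<in> topspace (simplex_top n). f x \<in> U}))"

definition compact_open :: "'a topology \<Rightarrow> 'b topology \<Rightarrow> ('a \<Rightarrow> 'b) topology" where
  "compact_open X Y = topology_generated_by
     {{f. continuous_map X Y f \<and> f \<in> extensional (topspace X) \<and> f ` S \<subseteq> U} | S U.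
        compactin X S \<and> openin Y U}"

definition TOP :: "'a topology \<Rightarrow> 'b topology \<Rightarrow> ('a \<Rightarrow> 'b) topology" where
  "TOP X Y = kdelta (compact_open X Y)"

definition interval_top :: "real \<Rightarrow> real topology" where
  "interval_top \<epsilon> = subtopology euclideanreal {0..\<epsilon>}"

definition natural_paths :: "nat \<Rightarrow> real \<Rightarrow> (real \<Rightarrow> (nat \<Rightarrow> real)) set" where
  "natural_paths n \<epsilon> = {\<phi>. \<phi> \<in> extensional {0..\<epsilon>} \<and>
      continuous_map (interval_top \<epsilon>) (cube_top n) \<phi> \<and>
      (\<forall>s t i. 0 \<le> s \<and> s \<le> t \<and> t \<le> \<epsilon> \<longrightarrow> \<phi> s i \<le> \<phi> t i) \<and>
      (\<forall>t\<in>{0..\<epsilon>}. (\<Sum>i=1..n. \<phi> t i) = t)}"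

definition branch_set :: "'c set \<Rightarrow> 'c set \<Rightarrow> ('c \<Rightarrow> nat) \<Rightarrow> (nat \<Rightarrow> bool \<Rightarrow> 'c \<Rightarrow> 'c)
    \<Rightarrow> real \<Rightarrow> 'c \<Rightarrow> (real \<Rightarrow> ('c \<times> (nat \<Rightarrow> real)) set) set" where
  "branch_set K X dm d \<epsilon> \<alpha> =
     {restrict (\<lambda>t. geo_pt K dm d c (\<phi> t)) {0..\<epsilon>} | c \<phi>.
        c \<in> cells_from X dm d \<alpha> \<and> \<phi> \<in> natural_paths (dm c) \<epsilon>}"

definition branch_top :: "'c set \<Rightarrow> 'c set \<Rightarrow> ('c \<Rightarrow> nat) \<Rightarrow> (nat \<Rightarrow> bool \<Rightarrow> 'c \<Rightarrow> 'c)
    \<Rightarrow> real \<Rightarrow> 'c \<Rightarrow> (real \<Rightarrow> ('c \<times> (nat \<Rightarrow> real)) set) topology" where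
  "branch_top K X dm d \<epsilon> \<alpha> =
     kdelta (subtopology (TOP (interval_top \<epsilon>) (realization K X dm d)) (branch_set K X dm d \<epsilon> \<alpha>))"

text \<open>P^-(X, eps): coproduct over the vertices alpha of X (the summands are disjoint
  as sets, so the coproduct is realized on their union).\<close>
definition branching_space :: "'c set \<Rightarrow> 'c set \<Rightarrow> ('c \<Rightarrow> nat) \<Rightarrow> (nat \<Rightarrow> bool \<Rightarrow> 'c \<Rightarrow> 'c)
    \<Rightarrow> real \<Rightarrow> (real \<Rightarrow> ('c \<times> (nat \<Rightarrow> real)) set) topology" where
  "branching_space K X dm d \<epsilon> = topology (\<lambda>U.
     U \<subseteq> (\<Union>\<alpha>\<in>{v \<in> X. dm v = 0}. topspace (branch_top K X dm d \<epsilon> \<alpha>)) \<and>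
     (\<forall>\<alpha>\<in>{v \<in> X. dm v = 0}.
        openin (branch_top K X dm d \<epsilon> \<alpha>) (U \<inter> topspace (branch_top K X dm d \<epsilon> \<alpha>))))"

definition ord_less :: "'i rel \<Rightarrow> 'i \<Rightarrow> 'i \<Rightarrow> bool" where
  "ord_less r a b \<longleftrightarrow> (a, b) \<in> r \<and> a \<noteq> b"

definition is_limit :: "'i rel \<Rightarrow> 'i \<Rightarrow> bool" where
  "is_limit r \<nu> \<longleftrightarrow> (\<exists>\<mu>. ord_less r \<mu> \<nu>) \<and>
     (\<forall>\<mu>. ord_less r \<mu> \<nu> \<longrightarrow> (\<exists>\<xi>. ord_less r \<mu> \<xi> \<and> ord_less r \<xi> \<nu>))"

text \<open>Transfinite tower of sub-precubical sets (of a common ambient precubical structure)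
  indexed by the well-order r, in which each step is the attachment of exactly one new
  cube along its boundary (a pushout of the boundary inclusion), and which is
  colimit-preserving (union) at limit ordinals.\<close>
definition cell_tower :: "'i rel \<Rightarrow> ('i \<Rightarrow> 'c set) \<Rightarrow> ('c \<Rightarrow> nat) \<Rightarrow> (nat \<Rightarrow> bool \<Rightarrow> 'c \<Rightarrow> 'c) \<Rightarrow> bool" where
  "cell_tower r X dm d \<longleftrightarrow> Well_order r \<and>
     (\<forall>\<mu>\<in>Field r. precubical (X \<mu>) dm d) \<and>
     (\<forall>\<mu> \<nu>. \<mu> \<in> Field r \<and> \<nu> \<in> Field r \<and> ord_less r \<mu> \<nu> \<longrightarrow> X \<mu> \<subseteq> X \<nu>) \<and>
     (\<forall>\<mu> \<mu>'. \<mu> \<in> Field r \<and> \<mu>' \<in> Field r \<and> ord_less r \<mu> \<mu>' \<and>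
         \<not> (\<exists>\<xi>. ord_less r \<mu> \<xi> \<and> ord_less r \<xi> \<mu>') \<longrightarrow>
         (\<exists>c. c \<notin> X \<mu> \<and> X \<mu>' = insert c (X \<mu>))) \<and>
     (\<forall>\<nu>\<in>Field r. is_limit r \<nu> \<longrightarrow> X \<nu> = (\<Union>\<mu>\<in>{\<mu>. ord_less r \<mu> \<nu>}. X \<mu>))"

text \<open>Colimit (in Top, equivalently in Delta-generated spaces) of the chain of
  inclusions P^-(X mu, eps), mu < nu: union with the final topology.\<close>
definition colim_branching :: "'i rel \<Rightarrow> ('i \<Rightarrow> 'c set) \<Rightarrow> 'c set \<Rightarrow> ('c \<Rightarrow> nat)
    \<Rightarrow> (nat \<Rightarrow> bool \<Rightarrow> 'c \<Rightarrow> 'c) \<Rightarrow> real \<Rightarrow> 'i \<Rightarrow> (real \<Rightarrow> ('c \<times> (nat \<Rightarrow> real)) set) topology" where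
  "colim_branching r X K dm d \<epsilon> \<nu> = topology (\<lambda>U.
     U \<subseteq> (\<Union>\<mu>\<in>{\<mu>. ord_less r \<mu> \<nu>}. topspace (branching_space K (X \<mu>) dm d \<epsilon>)) \<and>
     (\<forall>\<mu>. ord_less r \<mu> \<nu> \<longrightarrow>
        openin (branching_space K (X \<mu>) dm d \<epsilon>) (U \<inter> topspace (branching_space K (X \<mu>) dm d \<epsilon>))))"

end

theory Submission
  imports Defs
begin


definition del :: "nat \<Rightarrow> (nat \<Rightarrow> real) \<Rightarrow> (nat \<Rightarrow> real)" where
  "del i x = (\<lambda>j. if j < i then x j else x (Suc j))"

definition bd :: "nat \<Rightarrow> (nat \<Rightarrow> real) \<Rightarrow> nat \<Rightarrow> bool" where
  "bd n x j \<longleftrightarrow> 1 \<le> j \<and> j \<le> n \<and> (x j = 0 \<or> x j = 1)"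

fun nf :: "(nat \<Rightarrow> bool \<Rightarrow> 'c \<Rightarrow> 'c) \<Rightarrow> nat \<Rightarrow> 'c \<Rightarrow> (nat \<Rightarrow> real) \<Rightarrow> 'c \<times> (nat \<Rightarrow> real)" where
  "nf d 0 c x = (c, x)"
| "nf d (Suc n) c x = (if \<exists>j. bd (Suc n) x j then
      (let j = (LEAST j. bd (Suc n) x j) in nf d n (d j (x j = 1) c) (del j x)) else (c, x))"

lemma coface_at [simp]: "coface i a x i = (if a then 1 else 0)"
  by (simp add: coface_def)

lemma del_coface [simp]: "del i (coface i a x) = x"
  by (auto simp: del_def coface_def)

lemma coface_del: "x i = (if a then 1 else 0) \<Longrightarrow> coface i a (del i x) = x"
  by (auto simp: del_def coface_def fun_eq_iff)

lemma del_coface_lt: "j < i \<Longrightarrow> del j (coface i a x) = coface (i - 1) a (del j x)"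
  by (auto simp: del_def coface_def fun_eq_iff)

lemma del_cube: "x \<in> cube n \<Longrightarrow> 1 \<le> i \<Longrightarrow> i \<le> n \<Longrightarrow> del i x \<in> cube (n - 1)"
  unfolding cube_def del_def by auto

lemma coface_cube:
  assumes "x \<in> cube (n - 1)" "1 \<le> i" "i \<le> n" shows "coface i a x \<in> cube n"
proof -
  have h: "1 \<le> j \<Longrightarrow> j \<le> n - 1 \<Longrightarrow> 0 \<le> x j" "1 \<le> j \<Longrightarrow> j \<le> n - 1 \<Longrightarrow> x j \<le> 1"
    "j = 0 \<or> n - 1 < j \<Longrightarrow> x j = 0" for j using assms(1) by (auto simp: cube_def)
  show ?thesis unfolding cube_def coface_def using assms(2,3) by (auto intro!: h)
qed

lemma nf_Suc_least:
  assumes "bd (Suc n) x j" "\<And>k. k < j \<Longrightarrow> \<not> bd (Suc n) x k"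
  shows "nf d (Suc n) c x = nf d n (d j (x j = 1) c) (del j x)"
proof -
  have "(LEAST j. bd (Suc n) x j) = j"
    by (rule Least_equality) (use assms not_less in auto)
  then show ?thesis using assms by (auto simp: Let_def)
qed

lemma nf_Suc_int:
  assumes "\<And>k. \<not> bd (Suc n) x k"
  shows "nf d (Suc n) c x = (c, x)"
  using assms by auto

lemma nf_glue:
  assumes K: "precubical K dm d"
  shows "c \<in> K \<Longrightarrow> dm c = Suc n \<Longrightarrow> 1 \<le> i \<Longrightarrow> i \<le> Suc n \<Longrightarrow>
     nf d n (d i a c) x = nf d (Suc n) c (coface i a x)"
proof (induction n arbitrary: c i x a)
  case (0 c i x a)
  then have i: "i = 1" by auto
  have "nf d (Suc 0) c (coface i a x) = nf d 0 (d i (coface i a x i = 1) c) (del i (coface i a x))"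
    by (rule nf_Suc_least) (auto simp: bd_def coface_def i)
  then show ?case by (simp del: nf.simps)
next
  case (Suc m c i x a)
  define x' where "x' = coface i a x"
  have Pi: "bd (Suc (Suc m)) x' i" using Suc.prems by (auto simp: bd_def x'_def coface_def)
  define j0 where "j0 = (LEAST j. bd (Suc (Suc m)) x' j)"
  have Pj0: "bd (Suc (Suc m)) x' j0" unfolding j0_def by (rule LeastI, rule Pi)
  have nlt: "\<And>k. k < j0 \<Longrightarrow> \<not> bd (Suc (Suc m)) x' k" unfolding j0_def by (rule not_less_Least)
  have "j0 \<le> i" unfolding j0_def by (rule Least_le, rule Pi)
  have R: "nf d (Suc (Suc m)) c x' = nf d (Suc m) (d j0 (x' j0 = 1) c) (del j0 x')"
    by (rule nf_Suc_least[OF Pj0 nlt])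
  show ?case
  proof (cases "j0 = i")
    case True
    then show ?thesis using R by (simp add: x'_def del: nf.simps)
  next
    case False
    with \<open>j0 \<le> i\<close> have lt: "j0 < i" by simp
    have xj: "x' k = x k" if "k < i" for k using that by (simp add: x'_def coface_def)
    have Q: "bd (Suc m) x j0" using Pj0 lt Suc.prems xj[OF lt] by (auto simp: bd_def)
    have nQ: "\<not> bd (Suc m) x k" if "k < j0" for k
      using nlt[OF that] xj[of k] that lt by (auto simp: bd_def)
    have L: "nf d (Suc m) (d i a c) x = nf d m (d j0 (x j0 = 1) (d i a c)) (del j0 x)"
      by (rule nf_Suc_least[OF Q nQ])
    have j01: "1 \<le> j0" using Pj0 by (simp add: bd_def)
    have c1: "d j0 (x j0 = 1) c \<in> K" "dm (d j0 (x j0 = 1) c) = Suc m"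
      using K Suc.prems j01 lt unfolding precubical_def by auto
    have IH: "nf d m (d (i - 1) a (d j0 (x j0 = 1) c)) (del j0 x) =
        nf d (Suc m) (d j0 (x j0 = 1) c) (coface (i - 1) a (del j0 x))"
      by (rule Suc.IH[OF c1]) (use lt j01 Suc.prems in auto)
    have cub: "d j0 (x j0 = 1) (d i a c) = d (i - 1) a (d j0 (x j0 = 1) c)"
      using K Suc.prems j01 lt unfolding precubical_def by auto
    show ?thesis
      using R L IH cub del_coface_lt[OF lt, of a x] xj[OF lt]
      by (simp add: x'_def del: nf.simps)
  qed
qed


definition NF :: "('c \<Rightarrow> nat) \<Rightarrow> (nat \<Rightarrow> bool \<Rightarrow> 'c \<Rightarrow> 'c) \<Rightarrow> 'c \<times> (nat \<Rightarrow> real) \<Rightarrow> 'c \<times> (nat \<Rightarrow> real)" where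
  "NF dm d p = nf d (dm (fst p)) (fst p) (snd p)"

lemma glue_NF:
  assumes K: "precubical K dm d" and g: "glue K dm d p q"
  shows "NF dm d p = NF dm d q"
proof -
  obtain c i a x where c: "c \<in> K" "1 \<le> i" "i \<le> dm c" and p: "p = (d i a c, x)"
    and q: "q = (c, coface i a x)"
    using g unfolding glue_def by blast
  obtain n where n: "dm c = Suc n" using c by (cases "dm c") auto
  have "dm (d i a c) = n" using K c n unfolding precubical_def by auto
  then show ?thesis using nf_glue[OF K c(1) n c(2)] c n unfolding NF_def p q by simp
qed

lemma equiv_NF:
  assumes K: "precubical K dm d" and e: "equivclp (glue K dm d) p q"
  shows "NF dm d p = NF dm d q"
  using e unfolding equivclp_def
proof (induction rule: rtranclp_induct)
  case base then show ?case by simp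
next
  case (step y z)
  then show ?case using glue_NF[OF K, of y z] glue_NF[OF K, of z y] by (auto simp: symclp_def)
qed

lemma geo_pt_eq_NF:
  assumes K: "precubical K dm d" and e: "geo_pt K dm d c x = geo_pt K dm d c' x'"
  shows "NF dm d (c, x) = NF dm d (c', x')"
proof -
  have "(c', x') \<in> geo_pt K dm d c' x'" unfolding geo_pt_def by simp
  then have "(c', x') \<in> geo_pt K dm d c x" by (simp only: e)
  then have "equivclp (glue K dm d) (c, x) (c', x')" unfolding geo_pt_def by simp
  then show ?thesis by (rule equiv_NF[OF K])
qed

lemma geo_pt_glue:
  assumes "c \<in> K" "1 \<le> i" "i \<le> dm c" "x \<in> cube (dm c - 1)"
  shows "geo_pt K dm d (d i a c) x = geo_pt K dm d c (coface i a x)"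
proof -
  have g: "glue K dm d (d i a c, x) (c, coface i a x)" using assms unfolding glue_def by blast
  then have e: "equivclp (glue K dm d) (d i a c, x) (c, coface i a x)"
    by (simp add: equivclp_def symclp_def r_into_rtranclp)
  show ?thesis unfolding geo_pt_def
  proof (intro Collect_cong iffI)
    fix q assume "equivclp (glue K dm d) (d i a c, x) q"
    then show "equivclp (glue K dm d) (c, coface i a x) q"
      using e by (meson equivclp_sym transpD transp_equivclp)
  next
    fix q assume "equivclp (glue K dm d) (c, coface i a x) q"
    then show "equivclp (glue K dm d) (d i a c, x) q"
      using e by (meson transpD transp_equivclp)
  qed
qed

lemma nf_interior: "(\<And>j. \<not> bd n x j) \<Longrightarrow> nf d n c x = (c, x)"
  by (cases n) auto

lemma nf_cases:
  "nf d (Suc n) c x = (c, x) \<and> (\<forall>j. \<not> bd (Suc n) x j) \<or>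
   (\<exists>j. bd (Suc n) x j \<and> nf d (Suc n) c x = nf d n (d j (x j = 1) c) (del j x))"
proof (cases "\<exists>j. bd (Suc n) x j")
  case True
  define j where "j = (LEAST j. bd (Suc n) x j)"
  have "bd (Suc n) x j" unfolding j_def using True by (meson LeastI)
  moreover have "nf d (Suc n) c x = nf d n (d j (x j = 1) c) (del j x)"
    using True by (simp add: j_def Let_def)
  ultimately show ?thesis by blast
qed auto

lemma nf_in:
  assumes X: "precubical X dm d"
  shows "c \<in> X \<Longrightarrow> dm c = n \<Longrightarrow> fst (nf d n c x) \<in> X"
proof (induction n arbitrary: c x)
  case 0 then show ?case by simp
next
  case (Suc n c x)
  from nf_cases[of d n c x] show ?case
  proof
    assume "nf d (Suc n) c x = (c, x) \<and> (\<forall>j. \<not> bd (Suc n) x j)"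
    then show ?thesis using Suc by simp
  next
    assume "\<exists>j. bd (Suc n) x j \<and> nf d (Suc n) c x = nf d n (d j (x j = 1) c) (del j x)"
    then obtain j where j: "bd (Suc n) x j" and e: "nf d (Suc n) c x = nf d n (d j (x j = 1) c) (del j x)"
      by blast
    have "d j (x j = 1) c \<in> X" "dm (d j (x j = 1) c) = n"
      using X Suc.prems j unfolding precubical_def bd_def by auto
    then show ?thesis using Suc.IH e by simp
  qed
qed

lemma nf_faces_finite: "finite {fst (nf d n c x) | x. True}"
proof (induction n arbitrary: c)
  case 0 then show ?case by simp
next
  case (Suc n c)
  have "{fst (nf d (Suc n) c x) | x. True} \<subseteq>
      {c} \<union> (\<Union>j\<in>{1..Suc n}. \<Union>b\<in>UNIV. {fst (nf d n (d j b c) x) | x. True})"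
  proof
    fix z assume "z \<in> {fst (nf d (Suc n) c x) | x. True}"
    then obtain x where z: "z = fst (nf d (Suc n) c x)" by blast
    from nf_cases[of d n c x] show "z \<in> {c} \<union> (\<Union>j\<in>{1..Suc n}. \<Union>b\<in>UNIV. {fst (nf d n (d j b c) x) | x. True})"
    proof
      assume "nf d (Suc n) c x = (c, x) \<and> (\<forall>j. \<not> bd (Suc n) x j)"
      then show ?thesis using z by simp
    next
      assume "\<exists>j. bd (Suc n) x j \<and> nf d (Suc n) c x = nf d n (d j (x j = 1) c) (del j x)"
      then obtain j where j: "bd (Suc n) x j" and e: "nf d (Suc n) c x = nf d n (d j (x j = 1) c) (del j x)"
        by blast
      define b where "b = (x j = 1)"
      have "z = fst (nf d n (d j b c) (del j x))" using z e unfolding b_def by (simp del: nf.simps)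
      then have "z \<in> {fst (nf d n (d j b c) y) | y. True}" by blast
      moreover have "j \<in> {1..Suc n}" using j unfolding bd_def by auto
      ultimately show ?thesis by blast
    qed
  qed
  moreover have "finite ({c} \<union> (\<Union>j\<in>{1..Suc n}. \<Union>b\<in>UNIV. {fst (nf d n (d j b c) x) | x. True}))"
    using Suc.IH by auto
  ultimately show ?case by (rule finite_subset)
qed

lemma nf_preimage_finite: "finite {x \<in> cube n. nf d n c x = q}"
proof (induction n arbitrary: c)
  case 0
  have "{x \<in> cube 0. nf d 0 c x = q} \<subseteq> {snd q}" by auto
  then show ?case by (rule finite_subset) simp
next
  case (Suc n c)
  have "{x \<in> cube (Suc n). nf d (Suc n) c x = q} \<subseteq>
      {snd q} \<union> (\<Union>j\<in>{1..Suc n}. \<Union>b\<in>UNIV. coface j b ` {y \<in> cube n. nf d n (d j b c) y = q})"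
  proof
    fix x assume x: "x \<in> {x \<in> cube (Suc n). nf d (Suc n) c x = q}"
    from nf_cases[of d n c x] show "x \<in> {snd q} \<union> (\<Union>j\<in>{1..Suc n}. \<Union>b\<in>UNIV. coface j b ` {y \<in> cube n. nf d n (d j b c) y = q})"
    proof
      assume "nf d (Suc n) c x = (c, x) \<and> (\<forall>j. \<not> bd (Suc n) x j)"
      then show ?thesis using x by auto
    next
      assume "\<exists>j. bd (Suc n) x j \<and> nf d (Suc n) c x = nf d n (d j (x j = 1) c) (del j x)"
      then obtain j where j: "bd (Suc n) x j" and e: "nf d (Suc n) c x = nf d n (d j (x j = 1) c) (del j x)"
        by blast
      have xj: "x j = (if x j = 1 then 1 else 0)" using j unfolding bd_def by auto
      have "x = coface j (x j = 1) (del j x)" using coface_del[of x j "x j = 1", OF xj] by simp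
      moreover have "del j x \<in> cube n" using del_cube[of x "Suc n" j] x j unfolding bd_def by auto
      ultimately have "x \<in> coface j (x j = 1) ` {y \<in> cube n. nf d n (d j (x j = 1) c) y = q}"
        using x e by (intro image_eqI) auto
      moreover have "j \<in> {1..Suc n}" using j unfolding bd_def by auto
      ultimately show ?thesis by blast
    qed
  qed
  moreover have "finite ({snd q} \<union> (\<Union>j\<in>{1..Suc n}. \<Union>b\<in>UNIV. coface j b ` {y \<in> cube n. nf d n (d j b c) y = q}))"
    using Suc.IH by auto
  ultimately show ?case by (rule finite_subset)
qed



definition pts :: "'c set \<Rightarrow> 'c set \<Rightarrow> ('c \<Rightarrow> nat) \<Rightarrow> (nat \<Rightarrow> bool \<Rightarrow> 'c \<Rightarrow> 'c) \<Rightarrow> ('c \<times> (nat \<Rightarrow> real)) set set" where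
  "pts K X dm d = {geo_pt K dm d c x | c x. c \<in> X \<and> x \<in> cube (dm c)}"

lemma topspace_cube_top [simp]: "topspace (cube_top n) = cube n"
  by (simp add: cube_top_def)

lemma istop_family:
  "istopology (\<lambda>U. U \<subseteq> S \<and> (\<forall>c\<in>I. openin (T c) {x \<in> topspace (T c). g c x \<in> U}))"
proof -
  have 1: "U \<inter> V \<subseteq> S \<and> (\<forall>c\<in>I. openin (T c) {x \<in> topspace (T c). g c x \<in> U \<inter> V})"
    if "U \<subseteq> S \<and> (\<forall>c\<in>I. openin (T c) {x \<in> topspace (T c). g c x \<in> U})"
       "V \<subseteq> S \<and> (\<forall>c\<in>I. openin (T c) {x \<in> topspace (T c). g c x \<in> V})" for U V
  proof (intro conjI ballI)
    show "U \<inter> V \<subseteq> S" using that by auto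
    fix c assume "c \<in> I"
    have "{x \<in> topspace (T c). g c x \<in> U \<inter> V} =
       {x \<in> topspace (T c). g c x \<in> U} \<inter> {x \<in> topspace (T c). g c x \<in> V}" by auto
    then show "openin (T c) {x \<in> topspace (T c). g c x \<in> U \<inter> V}"
      using that \<open>c \<in> I\<close> by (simp add: openin_Int)
  qed
  have 2: "\<Union>KK \<subseteq> S \<and> (\<forall>c\<in>I. openin (T c) {x \<in> topspace (T c). g c x \<in> \<Union>KK})"
    if H: "\<forall>U\<in>KK. U \<subseteq> S \<and> (\<forall>c\<in>I. openin (T c) {x \<in> topspace (T c). g c x \<in> U})" for KK
  proof (intro conjI ballI)
    show "\<Union>KK \<subseteq> S" using H by auto
    fix c assume "c \<in> I"
    have "{x \<in> topspace (T c). g c x \<in> \<Union>KK} =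
       \<Union>((\<lambda>U. {x \<in> topspace (T c). g c x \<in> U}) ` KK)" by auto
    then show "openin (T c) {x \<in> topspace (T c). g c x \<in> \<Union>KK}"
      using H \<open>c \<in> I\<close> by (auto intro!: openin_Union)
  qed
  show ?thesis unfolding istopology_def using 1 2 by blast
qed

lemma istop_real:
  "istopology (\<lambda>U. U \<subseteq> pts K X dm d \<and>
      (\<forall>c\<in>X. openin (cube_top (dm c)) {x \<in> cube (dm c). geo_pt K dm d c x \<in> U}))"
  using istop_family[of "pts K X dm d" X "\<lambda>c. cube_top (dm c)" "\<lambda>c. geo_pt K dm d c"] by simp

lemma openin_realization:
  "openin (realization K X dm d) U \<longleftrightarrow> U \<subseteq> pts K X dm d \<and>
      (\<forall>c\<in>X. openin (cube_top (dm c)) {x \<in> cube (dm c). geo_pt K dm d c x \<in> U})"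
proof -
  have e: "{geo_pt K dm d c x | c x. c \<in> X \<and> x \<in> cube (dm c)} = pts K X dm d" by (simp add: pts_def)
  show ?thesis unfolding realization_def e using istop_real[of K X dm d] by simp
qed

lemma topspace_realization: "topspace (realization K X dm d) = pts K X dm d"
proof -
  have "openin (realization K X dm d) (pts K X dm d)"
    unfolding openin_realization
  proof (intro conjI ballI)
    fix c assume "c \<in> X"
    then have "{x \<in> cube (dm c). geo_pt K dm d c x \<in> pts K X dm d} = topspace (cube_top (dm c))"
      by (auto simp: pts_def)
    then show "openin (cube_top (dm c)) {x \<in> cube (dm c). geo_pt K dm d c x \<in> pts K X dm d}"
      using openin_topspace[of "cube_top (dm c)"] by simp
  qed simp
  then have "pts K X dm d \<subseteq> topspace (realization K X dm d)" by (rule openin_subset)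
  moreover have "topspace (realization K X dm d) \<subseteq> pts K X dm d"
    using openin_realization[of K X dm d "topspace (realization K X dm d)"] by simp
  ultimately show ?thesis by blast
qed

lemma closedin_realization:
  "closedin (realization K X dm d) Z \<longleftrightarrow> Z \<subseteq> pts K X dm d \<and>
      (\<forall>c\<in>X. closedin (cube_top (dm c)) {x \<in> cube (dm c). geo_pt K dm d c x \<in> Z})"
proof -
  have e: "{x \<in> cube (dm c). geo_pt K dm d c x \<in> pts K X dm d - Z} =
      cube (dm c) - {x \<in> cube (dm c). geo_pt K dm d c x \<in> Z}" if "c \<in> X" for c
    using that by (auto simp: pts_def)
  show ?thesis
    unfolding closedin_def topspace_realization openin_realization
    using e by (auto simp: closedin_def)
qed

lemma cont_geo_pt:
  assumes "c \<in> X"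
  shows "continuous_map (cube_top (dm c)) (realization K X dm d) (geo_pt K dm d c)"
  unfolding continuous_map_def topspace_realization
proof (intro conjI allI impI)
  show "geo_pt K dm d c \<in> topspace (cube_top (dm c)) \<rightarrow> pts K X dm d"
    using assms by (auto simp: pts_def)
  fix U assume "openin (realization K X dm d) U"
  then show "openin (cube_top (dm c)) {x \<in> topspace (cube_top (dm c)). geo_pt K dm d c x \<in> U}"
    using assms unfolding openin_realization by simp
qed

lemma cube_PiE: "cube n = PiE UNIV (\<lambda>i. if 1 \<le> i \<and> i \<le> n then {0..1} else {0})"
  unfolding cube_def PiE_def Pi_def extensional_def by (auto simp: not_le)

lemma compact_cube: "compact_space (cube_top n)"
proof -
  have "compactin (powertop_real UNIV) (cube n)"
    unfolding cube_PiE compactin_PiE by auto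
  then show ?thesis unfolding cube_top_def by (rule compact_space_subtopology)
qed

lemma hausdorff_cube: "Hausdorff_space (cube_top n)"
  unfolding cube_top_def
  by (rule Hausdorff_space_subtopology) (simp add: Hausdorff_space_product_topology)

lemma finite_closed_cube: "finite S \<Longrightarrow> S \<subseteq> cube n \<Longrightarrow> closedin (cube_top n) S"
  using t1_space_closedin_finite[of "cube_top n"] Hausdorff_imp_t1_space[OF hausdorff_cube[of n]]
  by simp

lemma cont_coface:
  assumes "1 \<le> i" "i \<le> n"
  shows "continuous_map (cube_top (n - 1)) (cube_top n) (coface i a)"
  unfolding cube_top_def continuous_map_in_subtopology
proof
  show "continuous_map (subtopology (powertop_real UNIV) (cube (n - 1))) (powertop_real UNIV) (coface i a)"
    unfolding continuous_map_componentwise_UNIV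
  proof
    fix k
    have p: "continuous_map (subtopology (powertop_real UNIV) (cube (n - 1))) euclideanreal (\<lambda>x. x m)" for m
      by (rule continuous_map_from_subtopology, rule continuous_map_product_projection) simp
    have "(\<lambda>x. coface i a x k) = (if k < i then (\<lambda>x. x k) else if k = i then (\<lambda>x. if a then 1 else 0) else (\<lambda>x. x (k - 1)))"
      by (auto simp: coface_def fun_eq_iff)
    then show "continuous_map (subtopology (powertop_real UNIV) (cube (n - 1))) euclideanreal (\<lambda>x. coface i a x k)"
      using p by auto
  qed
  show "coface i a \<in> topspace (subtopology (powertop_real UNIV) (cube (n - 1))) \<rightarrow> cube n"
    using coface_cube[OF _ assms] by auto
qed

lemma closed_coface_image:
  assumes "1 \<le> i" "i \<le> n" "closedin (cube_top (n - 1)) C"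
  shows "closedin (cube_top n) (coface i a ` C)"
proof -
  have "compactin (cube_top (n - 1)) C" by (rule closedin_compact_space[OF compact_cube assms(3)])
  then have "compactin (cube_top n) (coface i a ` C)" by (rule image_compactin[OF _ cont_coface[OF assms(1,2)]])
  then show ?thesis by (rule compactin_imp_closedin[OF hausdorff_cube])
qed

lemma pts_mono: "X \<subseteq> Y \<Longrightarrow> pts K X dm d \<subseteq> pts K Y dm d"
  unfolding pts_def by blast

lemma closed_sub:
  assumes K: "precubical K dm d" and X: "precubical X dm d" and XY: "X \<subseteq> Y" and YK: "Y \<subseteq> K"
    and Z: "closedin (realization K X dm d) Z"
  shows "closedin (realization K Y dm d) Z"
proof -
  have ZX: "Z \<subseteq> pts K X dm d" and ZC: "\<And>c. c \<in> X \<Longrightarrow> closedin (cube_top (dm c)) {x \<in> cube (dm c). geo_pt K dm d c x \<in> Z}"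
    using Z unfolding closedin_realization by auto
  have main: "\<And>e. e \<in> K \<Longrightarrow> dm e = n \<Longrightarrow> closedin (cube_top n) {x \<in> cube n. geo_pt K dm d e x \<in> Z}" for n
  proof (induction n rule: less_induct)
    case (less n e)
    show ?case
    proof (cases "e \<in> X")
      case True
      then show ?thesis using ZC[of e] less.prems by simp
    next
      case False
      define F where "F = (\<lambda>j b. coface j b ` {y \<in> cube (n - 1). geo_pt K dm d (d j b e) y \<in> Z})"
      have eq: "{x \<in> cube n. geo_pt K dm d e x \<in> Z} = (\<Union>j\<in>{1..n}. \<Union>b\<in>UNIV. F j b)"
      proof (intro equalityI subsetI)
        fix x assume x: "x \<in> {x \<in> cube n. geo_pt K dm d e x \<in> Z}"
        then obtain c y where cy: "c \<in> X" "y \<in> cube (dm c)" "geo_pt K dm d e x = geo_pt K dm d c y"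
          using ZX unfolding pts_def by blast
        have NFe: "NF dm d (e, x) = NF dm d (c, y)" by (rule geo_pt_eq_NF[OF K cy(3)])
        have "fst (NF dm d (c, y)) \<in> X" unfolding NF_def using nf_in[OF X cy(1)] by simp
        then have nX: "fst (nf d n e x) \<in> X" using NFe less.prems unfolding NF_def by simp
        have "\<exists>j. bd n x j"
        proof (rule ccontr)
          assume "\<not> (\<exists>j. bd n x j)"
          then have "nf d n e x = (e, x)" by (intro nf_interior) auto
          then show False using nX False by simp
        qed
        then obtain j where j: "bd n x j" by blast
        define b where "b = (x j = 1)"
        have xj: "x j = (if b then 1 else 0)" using j unfolding bd_def b_def by auto
        have x_eq: "x = coface j b (del j x)" using coface_del[of x j b, OF xj] by simp
        have dc: "del j x \<in> cube (n - 1)" using del_cube[of x n j] x j unfolding bd_def by auto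
        have "geo_pt K dm d (d j b e) (del j x) = geo_pt K dm d e (coface j b (del j x))"
          using geo_pt_glue[of e K j dm "del j x" d b] less.prems j dc unfolding bd_def by auto
        then have "geo_pt K dm d (d j b e) (del j x) \<in> Z" using x x_eq by simp
        then have "x \<in> F j b" unfolding F_def using dc x_eq by blast
        moreover have "j \<in> {1..n}" using j unfolding bd_def by auto
        ultimately show "x \<in> (\<Union>j\<in>{1..n}. \<Union>b\<in>UNIV. F j b)" by blast
      next
        fix x assume "x \<in> (\<Union>j\<in>{1..n}. \<Union>b\<in>UNIV. F j b)"
        then obtain j b y where j: "j \<in> {1..n}" and y: "y \<in> cube (n - 1)" "geo_pt K dm d (d j b e) y \<in> Z"
          and x: "x = coface j b y" unfolding F_def by blast
        have "geo_pt K dm d (d j b e) y = geo_pt K dm d e (coface j b y)"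
          using geo_pt_glue[of e K j dm y d b] less.prems j y by auto
        then show "x \<in> {x \<in> cube n. geo_pt K dm d e x \<in> Z}"
          using x y j coface_cube[of y n j b] by auto
      qed
      have cl: "closedin (cube_top n) (F j b)" if j: "j \<in> {1..n}" for j b
      proof -
        have "d j b e \<in> K" "dm (d j b e) = n - 1" using K less.prems j unfolding precubical_def by auto
        then have "closedin (cube_top (n - 1)) {y \<in> cube (n - 1). geo_pt K dm d (d j b e) y \<in> Z}"
          using less.IH[of "n - 1"] j by auto
        then show ?thesis unfolding F_def using j by (intro closed_coface_image) auto
      qed
      have "closedin (cube_top n) (\<Union>((\<lambda>(j, b). F j b) ` ({1..n} \<times> UNIV)))"
        by (rule closedin_Union) (use cl in auto)
      moreover have "(\<Union>((\<lambda>(j, b). F j b) ` ({1..n} \<times> UNIV))) = (\<Union>j\<in>{1..n}. \<Union>b\<in>UNIV. F j b)" by auto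
      ultimately show ?thesis using eq by simp
    qed
  qed
  show ?thesis unfolding closedin_realization
  proof (intro conjI ballI)
    show "Z \<subseteq> pts K Y dm d" using ZX pts_mono[OF XY] by blast
    fix c assume "c \<in> Y" then show "closedin (cube_top (dm c)) {x \<in> cube (dm c). geo_pt K dm d c x \<in> Z}"
      using main YK by blast
  qed
qed

lemma open_sub:
  assumes K: "precubical K dm d" and X: "precubical X dm d" and XY: "X \<subseteq> Y" and YK: "Y \<subseteq> K"
    and V: "openin (realization K X dm d) V"
  shows "\<exists>W. openin (realization K Y dm d) W \<and> V = W \<inter> pts K X dm d"
proof -
  have "closedin (realization K X dm d) (pts K X dm d - V)"
    using V by (metis closedin_diff closedin_topspace topspace_realization)
  then have c: "closedin (realization K Y dm d) (pts K X dm d - V)" by (rule closed_sub[OF K X XY YK])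
  have "openin (realization K Y dm d) (pts K Y dm d - (pts K X dm d - V))"
    using c by (metis openin_diff openin_topspace topspace_realization)
  moreover have "V = (pts K Y dm d - (pts K X dm d - V)) \<inter> pts K X dm d"
    using V pts_mono[OF XY] openin_subset[OF V] unfolding topspace_realization by blast
  ultimately show ?thesis by blast
qed

lemma open_incl:
  assumes XY: "X \<subseteq> Y" and W: "openin (realization K Y dm d) W"
  shows "openin (realization K X dm d) (W \<inter> pts K X dm d)"
  unfolding openin_realization
proof (intro conjI ballI)
  show "W \<inter> pts K X dm d \<subseteq> pts K X dm d" by simp
  fix c assume c: "c \<in> X"
  have "{x \<in> cube (dm c). geo_pt K dm d c x \<in> W \<inter> pts K X dm d} = {x \<in> cube (dm c). geo_pt K dm d c x \<in> W}"
    using c by (auto simp: pts_def)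
  then show "openin (cube_top (dm c)) {x \<in> cube (dm c). geo_pt K dm d c x \<in> W \<inter> pts K X dm d}"
    using W c XY unfolding openin_realization by auto
qed



lemma istop_family2:
  "istopology (\<lambda>U. U \<subseteq> S \<and> (\<forall>c\<in>I. openin (T c) (U \<inter> topspace (T c))))"
proof -
  have 1: "U \<inter> V \<subseteq> S \<and> (\<forall>c\<in>I. openin (T c) ((U \<inter> V) \<inter> topspace (T c)))"
    if "U \<subseteq> S \<and> (\<forall>c\<in>I. openin (T c) (U \<inter> topspace (T c)))"
       "V \<subseteq> S \<and> (\<forall>c\<in>I. openin (T c) (V \<inter> topspace (T c)))" for U V
  proof (intro conjI ballI)
    show "U \<inter> V \<subseteq> S" using that by auto
    fix c assume "c \<in> I"
    have "(U \<inter> V) \<inter> topspace (T c) = (U \<inter> topspace (T c)) \<inter> (V \<inter> topspace (T c))" by blast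
    then show "openin (T c) ((U \<inter> V) \<inter> topspace (T c))"
      using that \<open>c \<in> I\<close> by (simp add: openin_Int)
  qed
  have 2: "\<Union>KK \<subseteq> S \<and> (\<forall>c\<in>I. openin (T c) (\<Union>KK \<inter> topspace (T c)))"
    if H: "\<forall>U\<in>KK. U \<subseteq> S \<and> (\<forall>c\<in>I. openin (T c) (U \<inter> topspace (T c)))" for KK
  proof (intro conjI ballI)
    show "\<Union>KK \<subseteq> S" using H by auto
    fix c assume "c \<in> I"
    have eq: "\<Union>KK \<inter> topspace (T c) = \<Union>((\<lambda>U. U \<inter> topspace (T c)) ` KK)" by blast
    show "openin (T c) (\<Union>KK \<inter> topspace (T c))"
      unfolding eq by (rule openin_Union) (use H \<open>c \<in> I\<close> in auto)
  qed
  show ?thesis unfolding istopology_def using 1 2 by blast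
qed

lemma istop_kd:
  "istopology (\<lambda>U. U \<subseteq> S \<and> (\<forall>n f. P n f \<longrightarrow> openin (T n) {x \<in> topspace (T n). f x \<in> U}))"
proof -
  have 1: "U \<inter> V \<subseteq> S \<and> (\<forall>n f. P n f \<longrightarrow> openin (T n) {x \<in> topspace (T n). f x \<in> U \<inter> V})"
    if "U \<subseteq> S \<and> (\<forall>n f. P n f \<longrightarrow> openin (T n) {x \<in> topspace (T n). f x \<in> U})"
       "V \<subseteq> S \<and> (\<forall>n f. P n f \<longrightarrow> openin (T n) {x \<in> topspace (T n). f x \<in> V})" for U V
  proof (intro conjI allI impI)
    show "U \<inter> V \<subseteq> S" using that by auto
    fix n f assume "P n f"
    have "{x \<in> topspace (T n). f x \<in> U \<inter> V} = {x \<in> topspace (T n). f x \<in> U} \<inter> {x \<in> topspace (T n). f x \<in> V}" by blast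
    then show "openin (T n) {x \<in> topspace (T n). f x \<in> U \<inter> V}"
      using that \<open>P n f\<close> by (simp add: openin_Int)
  qed
  have 2: "\<Union>KK \<subseteq> S \<and> (\<forall>n f. P n f \<longrightarrow> openin (T n) {x \<in> topspace (T n). f x \<in> \<Union>KK})"
    if H: "\<forall>U\<in>KK. U \<subseteq> S \<and> (\<forall>n f. P n f \<longrightarrow> openin (T n) {x \<in> topspace (T n). f x \<in> U})" for KK
  proof (intro conjI allI impI)
    show "\<Union>KK \<subseteq> S" using H by auto
    fix n f assume "P n f"
    have eq: "{x \<in> topspace (T n). f x \<in> \<Union>KK} = \<Union>((\<lambda>U. {x \<in> topspace (T n). f x \<in> U}) ` KK)" by blast
    show "openin (T n) {x \<in> topspace (T n). f x \<in> \<Union>KK}"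
      unfolding eq by (rule openin_Union) (use H \<open>P n f\<close> in auto)
  qed
  show ?thesis unfolding istopology_def using 1 2 by blast
qed

lemma kd_open:
  "openin (kdelta T) U \<longleftrightarrow> U \<subseteq> topspace T \<and>
     (\<forall>n f. continuous_map (simplex_top n) T f \<longrightarrow>
        openin (simplex_top n) {x \<in> topspace (simplex_top n). f x \<in> U})"
  unfolding kdelta_def
  using topology_inverse'[OF istop_kd[of "topspace T" "\<lambda>n f. continuous_map (simplex_top n) T f" simplex_top]]
  by simp

lemma kd_top [simp]: "topspace (kdelta T) = topspace T"
proof -
  have "openin (kdelta T) (topspace T)"
    unfolding kd_open
  proof (intro conjI allI impI)
    fix n f assume "continuous_map (simplex_top n) T f"
    then have "{x \<in> topspace (simplex_top n). f x \<in> topspace T} = topspace (simplex_top n)"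
      by (auto simp: continuous_map_def)
    then show "openin (simplex_top n) {x \<in> topspace (simplex_top n). f x \<in> topspace T}" by simp
  qed simp
  then have "topspace T \<subseteq> topspace (kdelta T)" by (rule openin_subset)
  moreover have "topspace (kdelta T) \<subseteq> topspace T"
    using kd_open[of T "topspace (kdelta T)"] by simp
  ultimately show ?thesis by blast
qed

lemma kd_finer: "openin T U \<Longrightarrow> openin (kdelta T) U"
  unfolding kd_open
  by (auto simp: openin_subset openin_continuous_map_preimage)

lemma kd_cont_down: "continuous_map S (kdelta T) f \<Longrightarrow> continuous_map S T f"
  unfolding continuous_map_def using kd_finer by auto

lemma kd_cont_simplex:
  assumes "continuous_map (simplex_top n) T f"
  shows "continuous_map (simplex_top n) (kdelta T) f"
  using assms unfolding continuous_map_def[of _ "kdelta T"] kd_open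
  by (auto simp: continuous_map_def)

lemma co_top:
  "topspace (compact_open X Y) = {f. continuous_map X Y f \<and> f \<in> extensional (topspace X)}"
proof -
  have "{f. continuous_map X Y f \<and> f \<in> extensional (topspace X) \<and> f ` {} \<subseteq> topspace Y} \<in>
      {{f. continuous_map X Y f \<and> f \<in> extensional (topspace X) \<and> f ` S \<subseteq> U} | S U.
        compactin X S \<and> openin Y U}" by blast
  then show ?thesis unfolding compact_open_def topology_generated_by_topspace by auto
qed

lemma TOP_top: "topspace (TOP X Y) = {f. continuous_map X Y f \<and> f \<in> extensional (topspace X)}"
  unfolding TOP_def by (simp add: co_top)

lemma co_cont:
  assumes "\<And>z. z \<in> topspace Z \<Longrightarrow> continuous_map X Y (g z) \<and> g z \<in> extensional (topspace X)"
    and "\<And>S U. compactin X S \<Longrightarrow> openin Y U \<Longrightarrow>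
       openin Z {z \<in> topspace Z. g z ` S \<subseteq> U}"
  shows "continuous_map Z (compact_open X Y) g"
  unfolding compact_open_def
proof (rule continuous_on_generated_topo)
  fix W assume "W \<in> {{f. continuous_map X Y f \<and> f \<in> extensional (topspace X) \<and> f ` S \<subseteq> U} | S U.
        compactin X S \<and> openin Y U}"
  then obtain S U where SU: "compactin X S" "openin Y U"
    and W: "W = {f. continuous_map X Y f \<and> f \<in> extensional (topspace X) \<and> f ` S \<subseteq> U}" by blast
  have "g -` W \<inter> topspace Z = {z \<in> topspace Z. g z ` S \<subseteq> U}" using assms(1) W by auto
  then show "openin Z (g -` W \<inter> topspace Z)" using assms(2)[OF SU] by simp
next
  have mem: "{f. continuous_map X Y f \<and> f \<in> extensional (topspace X) \<and> f ` {} \<subseteq> topspace Y} \<in>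
      {{f. continuous_map X Y f \<and> f \<in> extensional (topspace X) \<and> f ` S \<subseteq> U} | S U.
        compactin X S \<and> openin Y U}" by blast
  show "g ` topspace Z \<subseteq> \<Union> {{f. continuous_map X Y f \<and> f \<in> extensional (topspace X) \<and> f ` S \<subseteq> U} | S U.
        compactin X S \<and> openin Y U}"
  proof
    fix y assume "y \<in> g ` topspace Z"
    then obtain z where z: "z \<in> topspace Z" "y = g z" by blast
    have "g z \<in> {f. continuous_map X Y f \<and> f \<in> extensional (topspace X) \<and> f ` {} \<subseteq> topspace Y}"
      using assms(1)[OF z(1)] by simp
    then show "y \<in> \<Union> {{f. continuous_map X Y f \<and> f \<in> extensional (topspace X) \<and> f ` S \<subseteq> U} | S U.
        compactin X S \<and> openin Y U}" using z(2) by (intro UnionI[OF mem]) (simp only:)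
  qed
qed

lemma co_preimage_open:
  assumes f: "continuous_map Z (compact_open X Y) g" and S: "compactin X S" and U: "openin Y U"
  shows "openin Z {z \<in> topspace Z. g z ` S \<subseteq> U}"
proof -
  let ?W = "{f. continuous_map X Y f \<and> f \<in> extensional (topspace X) \<and> f ` S \<subseteq> U}"
  have "openin (compact_open X Y) ?W"
    unfolding compact_open_def by (rule topology_generated_by_Basis) (use S U in blast)
  then have "openin Z {z \<in> topspace Z. g z \<in> ?W}" by (rule openin_continuous_map_preimage[OF f])
  moreover have "{z \<in> topspace Z. g z \<in> ?W} = {z \<in> topspace Z. g z ` S \<subseteq> U}"
    using continuous_map_image_subset_topspace[OF f] by (auto simp: co_top)
  ultimately show ?thesis by simp
qed

lemma co_cont_pts:
  assumes "continuous_map Z (compact_open X Y) g" "z \<in> topspace Z"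
  shows "continuous_map X Y (g z)" "g z \<in> extensional (topspace X)"
  using continuous_map_image_subset_topspace[OF assms(1)] assms(2) by (auto simp: co_top)

lemma topspace_interval [simp]: "topspace (interval_top \<epsilon>) = {0..\<epsilon>}"
  by (simp add: interval_top_def)

lemma path_cont:
  assumes c: "c \<in> X" and phi: "\<phi> \<in> natural_paths (dm c) \<epsilon>"
  shows "continuous_map (interval_top \<epsilon>) (realization K X dm d) (restrict (\<lambda>t. geo_pt K dm d c (\<phi> t)) {0..\<epsilon>})"
proof -
  have "continuous_map (interval_top \<epsilon>) (cube_top (dm c)) \<phi>" using phi by (simp add: natural_paths_def)
  then have "continuous_map (interval_top \<epsilon>) (realization K X dm d) (geo_pt K dm d c \<circ> \<phi>)"
    by (rule continuous_map_compose) (rule cont_geo_pt[OF c])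
  then show ?thesis by (rule continuous_map_eq) auto
qed

lemma branch_top_top:
  "topspace (branch_top K X dm d \<epsilon> \<alpha>) = branch_set K X dm d \<epsilon> \<alpha>"
proof -
  have "branch_set K X dm d \<epsilon> \<alpha> \<subseteq> topspace (TOP (interval_top \<epsilon>) (realization K X dm d))"
  proof
    fix p assume "p \<in> branch_set K X dm d \<epsilon> \<alpha>"
    then obtain c \<phi> where p: "p = restrict (\<lambda>t. geo_pt K dm d c (\<phi> t)) {0..\<epsilon>}"
      and c: "c \<in> X" and phi: "\<phi> \<in> natural_paths (dm c) \<epsilon>"
      unfolding branch_set_def cells_from_def by blast
    show "p \<in> topspace (TOP (interval_top \<epsilon>) (realization K X dm d))"
      unfolding TOP_top p topspace_interval mem_Collect_eq
      using path_cont[where K=K and d=d and dm=dm and X=X and c=c, OF c phi] restrict_extensional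
      by (rule conjI)
  qed
  then have "topspace (TOP (interval_top \<epsilon>) (realization K X dm d)) \<inter> branch_set K X dm d \<epsilon> \<alpha> = branch_set K X dm d \<epsilon> \<alpha>"
    by (rule Int_absorb1)
  then show ?thesis unfolding branch_top_def kd_top topspace_subtopology .
qed

lemma branch_top_open:
  "openin (branch_top K X dm d \<epsilon> \<alpha>) V \<longleftrightarrow> V \<subseteq> branch_set K X dm d \<epsilon> \<alpha> \<and>
     (\<forall>n f. continuous_map (simplex_top n) (subtopology (TOP (interval_top \<epsilon>) (realization K X dm d)) (branch_set K X dm d \<epsilon> \<alpha>)) f \<longrightarrow>
        openin (simplex_top n) {x \<in> topspace (simplex_top n). f x \<in> V})"
proof -
  have "topspace (subtopology (TOP (interval_top \<epsilon>) (realization K X dm d)) (branch_set K X dm d \<epsilon> \<alpha>)) = branch_set K X dm d \<epsilon> \<alpha>"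
    using branch_top_top[of K X dm d \<epsilon> \<alpha>] unfolding branch_top_def by (simp only: kd_top)
  then show ?thesis unfolding branch_top_def kd_open by (simp only:)
qed

definition verts :: "'c set \<Rightarrow> ('c \<Rightarrow> nat) \<Rightarrow> 'c set" where
  "verts X dm = {v \<in> X. dm v = 0}"

lemma bs_open:
  "openin (branching_space K X dm d \<epsilon>) U \<longleftrightarrow>
     U \<subseteq> (\<Union>\<alpha>\<in>verts X dm. branch_set K X dm d \<epsilon> \<alpha>) \<and>
     (\<forall>\<alpha>\<in>verts X dm. openin (branch_top K X dm d \<epsilon> \<alpha>) (U \<inter> branch_set K X dm d \<epsilon> \<alpha>))"
proof -
  have "openin (branching_space K X dm d \<epsilon>) U \<longleftrightarrow>
     U \<subseteq> (\<Union>\<alpha>\<in>{v \<in> X. dm v = 0}. topspace (branch_top K X dm d \<epsilon> \<alpha>)) \<and>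
     (\<forall>\<alpha>\<in>{v \<in> X. dm v = 0}. openin (branch_top K X dm d \<epsilon> \<alpha>) (U \<inter> topspace (branch_top K X dm d \<epsilon> \<alpha>)))"
  proof -
    have ist: "istopology (\<lambda>U. U \<subseteq> (\<Union>\<alpha>\<in>{v \<in> X. dm v = 0}. topspace (branch_top K X dm d \<epsilon> \<alpha>)) \<and>
     (\<forall>\<alpha>\<in>{v \<in> X. dm v = 0}. openin (branch_top K X dm d \<epsilon> \<alpha>) (U \<inter> topspace (branch_top K X dm d \<epsilon> \<alpha>))))"
      by (rule istop_family2[of "\<Union>\<alpha>\<in>{v \<in> X. dm v = 0}. topspace (branch_top K X dm d \<epsilon> \<alpha>)"
        "{v \<in> X. dm v = 0}" "\<lambda>\<alpha>. branch_top K X dm d \<epsilon> \<alpha>"])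
    show ?thesis unfolding branching_space_def topology_inverse'[OF ist] by (rule refl)
  qed
  then show ?thesis by (simp only: branch_top_top verts_def)
qed

lemma bs_top:
  "topspace (branching_space K X dm d \<epsilon>) = (\<Union>\<alpha>\<in>verts X dm. branch_set K X dm d \<epsilon> \<alpha>)"
proof -
  have "openin (branching_space K X dm d \<epsilon>) (\<Union>\<alpha>\<in>verts X dm. branch_set K X dm d \<epsilon> \<alpha>)"
    unfolding bs_open
  proof (intro conjI ballI)
    fix \<alpha> assume "\<alpha> \<in> verts X dm"
    then have "(\<Union>\<alpha>\<in>verts X dm. branch_set K X dm d \<epsilon> \<alpha>) \<inter> branch_set K X dm d \<epsilon> \<alpha> = topspace (branch_top K X dm d \<epsilon> \<alpha>)"
      by (auto simp: branch_top_top)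
    then show "openin (branch_top K X dm d \<epsilon> \<alpha>) ((\<Union>\<alpha>\<in>verts X dm. branch_set K X dm d \<epsilon> \<alpha>) \<inter> branch_set K X dm d \<epsilon> \<alpha>)"
      by simp
  qed simp
  then have "(\<Union>\<alpha>\<in>verts X dm. branch_set K X dm d \<epsilon> \<alpha>) \<subseteq> topspace (branching_space K X dm d \<epsilon>)"
    by (rule openin_subset)
  moreover have "topspace (branching_space K X dm d \<epsilon>) \<subseteq> (\<Union>\<alpha>\<in>verts X dm. branch_set K X dm d \<epsilon> \<alpha>)"
    using bs_open[of K X dm d \<epsilon> "topspace (branching_space K X dm d \<epsilon>)"] by simp
  ultimately show ?thesis by blast
qed

lemma colim_open:
  "openin (colim_branching r X K dm d \<epsilon> \<nu>) U \<longleftrightarrow>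
     U \<subseteq> (\<Union>\<mu>\<in>{\<mu>. ord_less r \<mu> \<nu>}. topspace (branching_space K (X \<mu>) dm d \<epsilon>)) \<and>
     (\<forall>\<mu>. ord_less r \<mu> \<nu> \<longrightarrow>
        openin (branching_space K (X \<mu>) dm d \<epsilon>) (U \<inter> topspace (branching_space K (X \<mu>) dm d \<epsilon>)))"
proof -
  have "openin (colim_branching r X K dm d \<epsilon> \<nu>) U \<longleftrightarrow>
     U \<subseteq> (\<Union>\<mu>\<in>{\<mu>. ord_less r \<mu> \<nu>}. topspace (branching_space K (X \<mu>) dm d \<epsilon>)) \<and>
     (\<forall>\<mu>\<in>{\<mu>. ord_less r \<mu> \<nu>}.
        openin (branching_space K (X \<mu>) dm d \<epsilon>) (U \<inter> topspace (branching_space K (X \<mu>) dm d \<epsilon>)))"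
  proof -
    have ist: "istopology (\<lambda>U. U \<subseteq> (\<Union>\<mu>\<in>{\<mu>. ord_less r \<mu> \<nu>}. topspace (branching_space K (X \<mu>) dm d \<epsilon>)) \<and>
     (\<forall>\<mu>. ord_less r \<mu> \<nu> \<longrightarrow>
        openin (branching_space K (X \<mu>) dm d \<epsilon>) (U \<inter> topspace (branching_space K (X \<mu>) dm d \<epsilon>))))"
      using istop_family2[of "\<Union>\<mu>\<in>{\<mu>. ord_less r \<mu> \<nu>}. topspace (branching_space K (X \<mu>) dm d \<epsilon>)"
        "{\<mu>. ord_less r \<mu> \<nu>}" "\<lambda>\<mu>. branching_space K (X \<mu>) dm d \<epsilon>"] by simp
    show ?thesis unfolding colim_branching_def topology_inverse'[OF ist] by simp
  qed
  then show ?thesis by simp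
qed



lemma topspace_interval2 [simp]: "topspace (interval_top \<epsilon>) = {0..\<epsilon>}"
  by (simp add: interval_top_def)

lemma prec_face:
  assumes "precubical X dm d" "c \<in> X" "1 \<le> i" "i \<le> dm c"
  shows "d i a c \<in> X" "dm (d i a c) = dm c - 1"
  using assms unfolding precubical_def by blast+

lemma prec_cub:
  assumes "precubical X dm d" "c \<in> X" "1 \<le> i" "i < j" "j \<le> dm c"
  shows "d i a (d j b c) = d (j - 1) b (d i a c)"
  using assms unfolding precubical_def by blast

lemma lowf_in:
  assumes X: "precubical X dm d"
  shows "c \<in> X \<Longrightarrow> k \<le> dm c \<Longrightarrow> lowf d k c \<in> X \<and> dm (lowf d k c) = dm c - k"
proof (induction k arbitrary: c)
  case 0 then show ?case by simp
next
  case (Suc k c)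
  have "d (Suc k) False c \<in> X" "dm (d (Suc k) False c) = dm c - 1"
    using prec_face[OF X Suc.prems(1), of "Suc k"] Suc.prems by auto
  then show ?case using Suc.IH[of "d (Suc k) False c"] Suc.prems by auto
qed

lemma lowf_face:
  assumes X: "precubical X dm d"
  shows "c \<in> X \<Longrightarrow> dm c = Suc n \<Longrightarrow> 1 \<le> i \<Longrightarrow> i \<le> Suc n \<Longrightarrow>
    lowf d n (d i False c) = lowf d (Suc n) c"
proof (induction n arbitrary: c i)
  case 0 then have "i = 1" by simp
  then show ?case by simp
next
  case (Suc m c i)
  show ?case
  proof (cases "i = Suc (Suc m)")
    case True then show ?thesis by simp
  next
    case False
    then have i: "i \<le> Suc m" using Suc.prems by simp
    define c' where "c' = d (Suc (Suc m)) False c"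
    have c': "c' \<in> X" "dm c' = Suc m" using prec_face[OF X Suc.prems(1), of "Suc (Suc m)"] Suc.prems
      unfolding c'_def by auto
    have cub: "d i False c' = d (Suc m) False (d i False c)"
      using prec_cub[OF X Suc.prems(1) Suc.prems(3), of "Suc (Suc m)" False False] Suc.prems i
      unfolding c'_def by simp
    have "lowf d (Suc m) (d i False c) = lowf d m (d (Suc m) False (d i False c))" by simp
    also have "\<dots> = lowf d m (d i False c')" using cub by simp
    also have "\<dots> = lowf d (Suc m) c'" by (rule Suc.IH[OF c']) (use Suc.prems i in auto)
    also have "\<dots> = lowf d (Suc (Suc m)) c" by (simp add: c'_def)
    finally show ?thesis .
  qed
qed

lemma init_face:
  assumes X: "precubical X dm d" and c: "c \<in> X" and i: "1 \<le> i" "i \<le> dm c"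
  shows "init_vertex dm d (d i False c) = init_vertex dm d c"
proof -
  obtain n where n: "dm c = Suc n" using i by (cases "dm c") auto
  have "dm (d i False c) = n" using X c i n unfolding precubical_def by auto
  then show ?thesis unfolding init_vertex_def using lowf_face[OF X c n i(1)] i n by simp
qed

lemma init_in:
  assumes X: "precubical X dm d" and c: "c \<in> X"
  shows "init_vertex dm d c \<in> X \<and> dm (init_vertex dm d c) = 0"
  using lowf_in[OF X c, of "dm c"] unfolding init_vertex_def by simp

lemma sum_del:
  "1 \<le> j \<Longrightarrow> j \<le> Suc m \<Longrightarrow> (\<Sum>i=1..m. del j x i) + x j = (\<Sum>i=1..Suc m. x i)"
proof (induction m)
  case 0 then show ?case by simp
next
  case (Suc m)
  show ?case
  proof (cases "j \<le> Suc m")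
    case True
    have "(\<Sum>i=1..Suc m. del j x i) = (\<Sum>i=1..m. del j x i) + del j x (Suc m)" by simp
    moreover have "del j x (Suc m) = x (Suc (Suc m))" using True by (simp add: del_def)
    ultimately show ?thesis using Suc.IH[OF Suc.prems(1) True] by simp
  next
    case False
    then have j: "j = Suc (Suc m)" using Suc.prems by simp
    have "(\<Sum>i=1..Suc m. del j x i) = (\<Sum>i=1..Suc m. x i)"
      by (rule sum.cong) (auto simp: del_def j)
    then show ?thesis using j by simp
  qed
qed

lemma cont_del:
  assumes "1 \<le> j" "j \<le> n"
  shows "continuous_map (cube_top n) (cube_top (n - 1)) (del j)"
  unfolding cube_top_def continuous_map_in_subtopology
proof
  show "continuous_map (subtopology (powertop_real UNIV) (cube n)) (powertop_real UNIV) (del j)"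
    unfolding continuous_map_componentwise_UNIV
  proof
    fix k
    have p: "continuous_map (subtopology (powertop_real UNIV) (cube n)) euclideanreal (\<lambda>x. x m)" for m
      by (rule continuous_map_from_subtopology, rule continuous_map_product_projection) simp
    have "(\<lambda>x. del j x k) = (if k < j then (\<lambda>x. x k) else (\<lambda>x. x (Suc k)))"
      by (auto simp: del_def fun_eq_iff)
    then show "continuous_map (subtopology (powertop_real UNIV) (cube n)) euclideanreal (\<lambda>x. del j x k)"
      using p by auto
  qed
  show "del j \<in> topspace (subtopology (powertop_real UNIV) (cube n)) \<rightarrow> cube (n - 1)"
    using del_cube[OF _ assms] by auto
qed

lemma norm_rep:
  assumes X: "precubical X dm d" and XK: "X \<subseteq> K" and eps: "0 < \<epsilon>" "\<epsilon> < 1"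
  shows "c \<in> X \<Longrightarrow> dm c = n \<Longrightarrow> 1 \<le> n \<Longrightarrow> \<phi> \<in> natural_paths n \<epsilon> \<Longrightarrow>
    \<exists>c' \<phi>'. c' \<in> X \<and> 1 \<le> dm c' \<and> init_vertex dm d c' = init_vertex dm d c \<and>
      \<phi>' \<in> natural_paths (dm c') \<epsilon> \<and> (\<forall>j. \<not> bd (dm c') (\<phi>' \<epsilon>) j) \<and>
      restrict (\<lambda>t. geo_pt K dm d c (\<phi> t)) {0..\<epsilon>} = restrict (\<lambda>t. geo_pt K dm d c' (\<phi>' t)) {0..\<epsilon>}"
proof (induction n arbitrary: c \<phi>)
  case 0 then show ?case by simp
next
  case (Suc n c \<phi>)
  show ?case
  proof (cases "\<forall>j. \<not> bd (Suc n) (\<phi> \<epsilon>) j")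
    case True
    show ?thesis
      by (intro exI[of _ c] exI[of _ \<phi>]) (use True Suc.prems in auto)
  next
    case False
    then obtain j where j: "bd (Suc n) (\<phi> \<epsilon>) j" by blast
    have j1: "1 \<le> j" "j \<le> Suc n" using j unfolding bd_def by auto
    have contphi: "continuous_map (interval_top \<epsilon>) (cube_top (Suc n)) \<phi>"
      and mono: "\<And>s t i. 0 \<le> s \<Longrightarrow> s \<le> t \<Longrightarrow> t \<le> \<epsilon> \<Longrightarrow> \<phi> s i \<le> \<phi> t i"
      and sum: "\<And>t. t \<in> {0..\<epsilon>} \<Longrightarrow> (\<Sum>i=1..Suc n. \<phi> t i) = t"
      and ext: "\<phi> \<in> extensional {0..\<epsilon>}"
      using Suc.prems(4) unfolding natural_paths_def by auto
    have incube: "\<phi> t \<in> cube (Suc n)" if "t \<in> {0..\<epsilon>}" for t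
      using continuous_map_image_subset_topspace[OF contphi] that by auto
    have nonneg: "0 \<le> \<phi> t i" if "t \<in> {0..\<epsilon>}" "1 \<le> i" "i \<le> Suc n" for t i
      using incube[OF that(1)] that unfolding cube_def by auto
    have epsin: "\<epsilon> \<in> {0..\<epsilon>}" using eps by simp
    have "\<phi> \<epsilon> j \<le> (\<Sum>i=1..Suc n. \<phi> \<epsilon> i)"
      by (rule member_le_sum) (use j1 nonneg[OF epsin] in auto)
    then have "\<phi> \<epsilon> j \<le> \<epsilon>" using sum[OF epsin] by simp
    then have phij0: "\<phi> \<epsilon> j = 0" using j eps unfolding bd_def by auto
    have phit0: "\<phi> t j = 0" if "t \<in> {0..\<epsilon>}" for t
      using mono[of t \<epsilon> j] nonneg[OF that j1] that phij0 by auto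
    have n1: "1 \<le> n"
    proof (rule ccontr)
      assume "\<not> 1 \<le> n"
      then have "n = 0" by simp
      then have "j = 1" using j1 by simp
      then show False using sum[OF epsin] phij0 eps \<open>n = 0\<close> by simp
    qed
    define c1 where "c1 = d j False c"
    have c1: "c1 \<in> X" "dm c1 = n" using X Suc.prems(1,2) j1 unfolding precubical_def c1_def by auto
    define \<psi> where "\<psi> = restrict (\<lambda>t. del j (\<phi> t)) {0..\<epsilon>}"
    have psi: "\<psi> \<in> natural_paths n \<epsilon>"
      unfolding natural_paths_def mem_Collect_eq
    proof (intro conjI allI impI ballI)
      show "\<psi> \<in> extensional {0..\<epsilon>}" unfolding \<psi>_def by simp
      have "continuous_map (interval_top \<epsilon>) (cube_top n) (del j \<circ> \<phi>)"
        using continuous_map_compose[OF contphi cont_del[OF j1]] by simp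
      then show "continuous_map (interval_top \<epsilon>) (cube_top n) \<psi>"
        unfolding \<psi>_def by (rule continuous_map_eq) auto
      fix s t i assume st: "0 \<le> s \<and> s \<le> t \<and> t \<le> \<epsilon>"
      then show "\<psi> s i \<le> \<psi> t i" unfolding \<psi>_def del_def using mono by auto
    next
      fix t assume t: "t \<in> {0..\<epsilon>}"
      have "(\<Sum>i=1..n. del j (\<phi> t) i) + \<phi> t j = (\<Sum>i=1..Suc n. \<phi> t i)" by (rule sum_del[OF j1])
      then show "(\<Sum>i=1..n. \<psi> t i) = t" unfolding \<psi>_def using t phit0[OF t] sum[OF t] by simp
    qed
    obtain c' \<phi>' where IH: "c' \<in> X" "1 \<le> dm c'" "init_vertex dm d c' = init_vertex dm d c1"
      "\<phi>' \<in> natural_paths (dm c') \<epsilon>" "\<forall>j. \<not> bd (dm c') (\<phi>' \<epsilon>) j"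
      "restrict (\<lambda>t. geo_pt K dm d c1 (\<psi> t)) {0..\<epsilon>} = restrict (\<lambda>t. geo_pt K dm d c' (\<phi>' t)) {0..\<epsilon>}"
      using Suc.IH[OF c1 n1 psi] by blast
    have iv: "init_vertex dm d c1 = init_vertex dm d c"
      unfolding c1_def by (rule init_face[OF X Suc.prems(1) j1(1)]) (use j1 Suc.prems in simp)
    have "restrict (\<lambda>t. geo_pt K dm d c (\<phi> t)) {0..\<epsilon>} = restrict (\<lambda>t. geo_pt K dm d c1 (\<psi> t)) {0..\<epsilon>}"
    proof (rule restrict_ext)
      fix t assume t: "t \<in> {0..\<epsilon>}"
      have dc: "del j (\<phi> t) \<in> cube (dm c - 1)" using del_cube[OF incube[OF t] j1] Suc.prems by simp
      have "\<phi> t = coface j False (del j (\<phi> t))"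
        using coface_del[of "\<phi> t" j False] phit0[OF t] by simp
      then have "geo_pt K dm d c (\<phi> t) = geo_pt K dm d c (coface j False (del j (\<phi> t)))" by simp
      also have "\<dots> = geo_pt K dm d c1 (del j (\<phi> t))"
        unfolding c1_def using geo_pt_glue[of c K j dm "del j (\<phi> t)" d False] XK Suc.prems j1 dc by auto
      finally show "geo_pt K dm d c (\<phi> t) = geo_pt K dm d c1 (\<psi> t)" unfolding \<psi>_def using t by simp
    qed
    then show ?thesis using IH iv by metis
  qed
qed

definition car :: "('c \<Rightarrow> nat) \<Rightarrow> (nat \<Rightarrow> bool \<Rightarrow> 'c \<Rightarrow> 'c) \<Rightarrow> ('c \<times> (nat \<Rightarrow> real)) set \<Rightarrow> 'c" where
  "car dm d p = fst (NF dm d (SOME q. q \<in> p))"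

lemma car_geo:
  assumes K: "precubical K dm d"
  shows "car dm d (geo_pt K dm d c x) = fst (nf d (dm c) c x)"
proof -
  have "(c, x) \<in> geo_pt K dm d c x" unfolding geo_pt_def by simp
  then have "(SOME q. q \<in> geo_pt K dm d c x) \<in> geo_pt K dm d c x" by (rule someI)
  then have "equivclp (glue K dm d) (c, x) (SOME q. q \<in> geo_pt K dm d c x)" unfolding geo_pt_def by simp
  then have "NF dm d (c, x) = NF dm d (SOME q. q \<in> geo_pt K dm d c x)" by (rule equiv_NF[OF K])
  then show ?thesis unfolding car_def NF_def by simp
qed



lemma bs_elem:
  assumes "p \<in> branch_set K X dm d \<epsilon> \<alpha>"
  obtains c \<phi> where "p = restrict (\<lambda>t. geo_pt K dm d c (\<phi> t)) {0..\<epsilon>}" "c \<in> X" "1 \<le> dm c"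
    "init_vertex dm d c = \<alpha>" "\<phi> \<in> natural_paths (dm c) \<epsilon>"
  using assms unfolding branch_set_def cells_from_def by blast

lemma bs_intro:
  assumes "c \<in> X" "1 \<le> dm c" "init_vertex dm d c = \<alpha>" "\<phi> \<in> natural_paths (dm c) \<epsilon>"
  shows "restrict (\<lambda>t. geo_pt K dm d c (\<phi> t)) {0..\<epsilon>} \<in> branch_set K X dm d \<epsilon> \<alpha>"
  using assms unfolding branch_set_def cells_from_def by blast

lemma bs_cont:
  assumes "p \<in> branch_set K X dm d \<epsilon> \<alpha>"
  shows "continuous_map (interval_top \<epsilon>) (realization K X dm d) p"
proof -
  obtain c \<phi> where p: "p = restrict (\<lambda>t. geo_pt K dm d c (\<phi> t)) {0..\<epsilon>}" and c: "c \<in> X"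
    and phi: "\<phi> \<in> natural_paths (dm c) \<epsilon>" using bs_elem[OF assms] by metis
  show ?thesis unfolding p by (rule path_cont[where K=K and d=d and dm=dm and X=X and c=c, OF c phi])
qed

lemma bs_ext: "p \<in> branch_set K X dm d \<epsilon> \<alpha> \<Longrightarrow> p \<in> extensional {0..\<epsilon>}"
  unfolding branch_set_def by auto

lemma bs_mono: "X \<subseteq> Y \<Longrightarrow> branch_set K X dm d \<epsilon> \<alpha> \<subseteq> branch_set K Y dm d \<epsilon> \<alpha>"
  unfolding branch_set_def cells_from_def by blast

lemma incl_cont:
  assumes "X \<subseteq> Y"
  shows "continuous_map (realization K X dm d) (realization K Y dm d) (\<lambda>x. x)"
  unfolding continuous_map_def topspace_realization
proof (intro conjI allI impI)
  show "(\<lambda>x. x) \<in> pts K X dm d \<rightarrow> pts K Y dm d" using pts_mono[OF assms] by auto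
  fix W assume "openin (realization K Y dm d) W"
  then have "openin (realization K X dm d) (W \<inter> pts K X dm d)" by (rule open_incl[OF assms])
  moreover have "{x \<in> pts K X dm d. x \<in> W} = W \<inter> pts K X dm d" by blast
  ultimately show "openin (realization K X dm d) {x \<in> pts K X dm d. x \<in> W}" by simp
qed

lemma co_mono:
  assumes XY: "X \<subseteq> Y" and f: "continuous_map Z (compact_open I (realization K X dm d)) f"
  shows "continuous_map Z (compact_open I (realization K Y dm d)) f"
proof (rule co_cont)
  fix z assume z: "z \<in> topspace Z"
  have "continuous_map I (realization K X dm d) (f z)" by (rule co_cont_pts(1)[OF f z])
  then have "continuous_map I (realization K Y dm d) ((\<lambda>x. x) \<circ> f z)"
    by (rule continuous_map_compose) (rule incl_cont[OF XY])
  then show "continuous_map I (realization K Y dm d) (f z) \<and> f z \<in> extensional (topspace I)"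
    using co_cont_pts(2)[OF f z] by (simp add: o_def)
next
  fix S W assume S: "compactin I S" and W: "openin (realization K Y dm d) W"
  have "{z \<in> topspace Z. f z ` S \<subseteq> W} = {z \<in> topspace Z. f z ` S \<subseteq> W \<inter> pts K X dm d}"
  proof (intro Collect_cong conj_cong refl)
    fix z assume z: "z \<in> topspace Z"
    have "f z ` S \<subseteq> pts K X dm d"
      using continuous_map_image_subset_topspace[OF co_cont_pts(1)[OF f z]] compactin_subset_topspace[OF S]
      unfolding topspace_realization by blast
    then show "(f z ` S \<subseteq> W) = (f z ` S \<subseteq> W \<inter> pts K X dm d)" by blast
  qed
  moreover have "openin Z {z \<in> topspace Z. f z ` S \<subseteq> W \<inter> pts K X dm d}"
    by (rule co_preimage_open[OF f S open_incl[OF XY W]])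
  ultimately show "openin Z {z \<in> topspace Z. f z ` S \<subseteq> W}" by simp
qed

lemma co_restrict:
  assumes K: "precubical K dm d" and X: "precubical X dm d" and XY: "X \<subseteq> Y" and YK: "Y \<subseteq> K"
    and f: "continuous_map Z (compact_open I (realization K Y dm d)) f"
    and fX: "\<And>z. z \<in> topspace Z \<Longrightarrow> continuous_map I (realization K X dm d) (f z)"
  shows "continuous_map Z (compact_open I (realization K X dm d)) f"
proof (rule co_cont)
  fix z assume z: "z \<in> topspace Z"
  show "continuous_map I (realization K X dm d) (f z) \<and> f z \<in> extensional (topspace I)"
    using fX[OF z] co_cont_pts(2)[OF f z] by simp
next
  fix S V assume S: "compactin I S" and V: "openin (realization K X dm d) V"
  obtain W where W: "openin (realization K Y dm d) W" and VW: "V = W \<inter> pts K X dm d"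
    using open_sub[OF K X XY YK V] by blast
  have "{z \<in> topspace Z. f z ` S \<subseteq> V} = {z \<in> topspace Z. f z ` S \<subseteq> W}"
  proof (intro Collect_cong conj_cong refl)
    fix z assume z: "z \<in> topspace Z"
    have "f z ` S \<subseteq> pts K X dm d"
      using continuous_map_image_subset_topspace[OF fX[OF z]] compactin_subset_topspace[OF S]
      unfolding topspace_realization by blast
    then show "(f z ` S \<subseteq> V) = (f z ` S \<subseteq> W)" unfolding VW by blast
  qed
  moreover have "openin Z {z \<in> topspace Z. f z ` S \<subseteq> W}"
    by (rule co_preimage_open[OF f S W])
  ultimately show "openin Z {z \<in> topspace Z. f z ` S \<subseteq> V}" by simp
qed

lemma fin_car:
  assumes K: "precubical K dm d" and E: "compactin (realization K Y dm d) E"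
  shows "finite (car dm d ` E)"
proof -
  define C where "C = car dm d ` E"
  define pk where "pk = (\<lambda>c. SOME p. p \<in> E \<and> car dm d p = c)"
  have pk: "pk c \<in> E \<and> car dm d (pk c) = c" if "c \<in> C" for c
  proof -
    have "\<exists>p. p \<in> E \<and> car dm d p = c" using that unfolding C_def by blast
    then show ?thesis unfolding pk_def by (rule someI_ex)
  qed
  define A where "A = pk ` C"
  have AE: "A \<subseteq> E" using pk unfolding A_def by blast
  have Ept: "E \<subseteq> pts K Y dm d" using compactin_subset_topspace[OF E] unfolding topspace_realization .
  have closedB: "closedin (realization K Y dm d) B" if B: "B \<subseteq> A" for B
    unfolding closedin_realization
  proof (intro conjI ballI)
    show "B \<subseteq> pts K Y dm d" using B AE Ept by blast
    fix e assume e: "e \<in> Y"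
    let ?F = "{fst (nf d (dm e) e x) | x. True}"
    have sub: "{x \<in> cube (dm e). geo_pt K dm d e x \<in> B} \<subseteq>
        (\<Union>c\<in>?F. {x \<in> cube (dm e). geo_pt K dm d e x = pk c})"
    proof
      fix x assume x: "x \<in> {x \<in> cube (dm e). geo_pt K dm d e x \<in> B}"
      then obtain c where c: "c \<in> C" "geo_pt K dm d e x = pk c" using B unfolding A_def by blast
      have "c = car dm d (geo_pt K dm d e x)" using pk[OF c(1)] c(2) by simp
      also have "\<dots> = fst (nf d (dm e) e x)" by (rule car_geo[OF K])
      finally have "c \<in> ?F" by blast
      then show "x \<in> (\<Union>c\<in>?F. {x \<in> cube (dm e). geo_pt K dm d e x = pk c})" using x c by blast
    qed
    have finpt: "finite {x \<in> cube (dm e). geo_pt K dm d e x = p}" for p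
    proof (cases "\<exists>x0\<in>cube (dm e). geo_pt K dm d e x0 = p")
      case True
      then obtain x0 where x0: "x0 \<in> cube (dm e)" "geo_pt K dm d e x0 = p" by blast
      have "{x \<in> cube (dm e). geo_pt K dm d e x = p} \<subseteq> {x \<in> cube (dm e). nf d (dm e) e x = nf d (dm e) e x0}"
      proof
        fix x assume "x \<in> {x \<in> cube (dm e). geo_pt K dm d e x = p}"
        then have "x \<in> cube (dm e)" "geo_pt K dm d e x = geo_pt K dm d e x0" using x0 by auto
        then show "x \<in> {x \<in> cube (dm e). nf d (dm e) e x = nf d (dm e) e x0}"
          using geo_pt_eq_NF[OF K, of e x e x0] unfolding NF_def by simp
      qed
      then show ?thesis using nf_preimage_finite by (rule finite_subset)
    next
      case False
      have "{x \<in> cube (dm e). geo_pt K dm d e x = p} = {}" using False by blast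
      then show ?thesis by (metis finite.emptyI)
    qed
    have "finite (\<Union>c\<in>?F. {x \<in> cube (dm e). geo_pt K dm d e x = pk c})"
      by (intro finite_UN_I nf_faces_finite finpt)
    then have "finite {x \<in> cube (dm e). geo_pt K dm d e x \<in> B}" using sub by (rule finite_subset[rotated])
    then show "closedin (cube_top (dm e)) {x \<in> cube (dm e). geo_pt K dm d e x \<in> B}"
      by (rule finite_closed_cube) blast
  qed
  have Acomp: "compactin (realization K Y dm d) A"
    by (rule closed_compactin[OF E AE closedB]) simp
  define Op where "Op = (\<lambda>a. pts K Y dm d - (A - {a}))"
  have Oopen: "openin (realization K Y dm d) (Op a)" if "a \<in> A" for a
  proof -
    have "closedin (realization K Y dm d) (A - {a})" by (rule closedB) blast
    then show ?thesis unfolding Op_def topspace_realization[symmetric] by (rule openin_diff[OF openin_topspace])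
  qed
  have Acov: "A \<subseteq> \<Union>(Op ` A)" using AE Ept unfolding Op_def by blast
  have H: "(\<forall>x\<in>Op ` A. openin (realization K Y dm d) x) \<and> A \<subseteq> \<Union>(Op ` A) \<longrightarrow>
      (\<exists>F. finite F \<and> F \<subseteq> Op ` A \<and> A \<subseteq> \<Union>F)"
    using Acomp unfolding compactin_def by blast
  have "\<forall>x\<in>Op ` A. openin (realization K Y dm d) x" using Oopen by blast
  then obtain F where F: "finite F" "F \<subseteq> Op ` A" "A \<subseteq> \<Union>F"
    using H Acov by blast
  obtain A' where A': "A' \<subseteq> A" "finite A'" "F = Op ` A'"
    using finite_subset_image[OF F(1) F(2)] by blast
  have "A \<subseteq> A'"
  proof
    fix x assume x: "x \<in> A"
    then obtain a where a: "a \<in> A'" "x \<in> Op a" using F(3) A'(3) by blast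
    then show "x \<in> A'" using x unfolding Op_def by blast
  qed
  then have "finite A" using A'(2) by (rule finite_subset)
  moreover have "C = car dm d ` A"
  proof (intro equalityI subsetI)
    fix c assume c: "c \<in> C"
    then have "c = car dm d (pk c)" using pk by simp
    then show "c \<in> car dm d ` A" unfolding A_def using c by blast
  next
    fix z assume "z \<in> car dm d ` A"
    then obtain c where c: "c \<in> C" "z = car dm d (pk c)" unfolding A_def by blast
    then show "z \<in> C" using pk[OF c(1)] by simp
  qed
  ultimately show ?thesis unfolding C_def by simp
qed

lemma tower_K:
  assumes T: "cell_tower r X dm d"
  shows "precubical (\<Union>\<mu>\<in>Field r. X \<mu>) dm d"
proof -
  have P: "\<And>\<mu>. \<mu> \<in> Field r \<Longrightarrow> precubical (X \<mu>) dm d" using T unfolding cell_tower_def by blast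
  let ?K = "\<Union>\<mu>\<in>Field r. X \<mu>"
  have A: "\<forall>c\<in>?K. \<forall>i a. 1 \<le> i \<and> i \<le> dm c \<longrightarrow> d i a c \<in> ?K \<and> dm (d i a c) = dm c - 1"
  proof (intro ballI allI impI)
    fix c i a assume c: "c \<in> ?K" and i: "1 \<le> i \<and> i \<le> dm c"
    then obtain \<mu> where \<mu>: "\<mu> \<in> Field r" "c \<in> X \<mu>" by blast
    show "d i a c \<in> ?K \<and> dm (d i a c) = dm c - 1"
      using prec_face[OF P[OF \<mu>(1)] \<mu>(2), of i a] i \<mu> by blast
  qed
  have B: "\<forall>c\<in>?K. \<forall>i j a b. 1 \<le> i \<and> i < j \<and> j \<le> dm c \<longrightarrow> d i a (d j b c) = d (j - 1) b (d i a c)"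
  proof (intro ballI allI impI)
    fix c i j a b assume c: "c \<in> ?K" and ij: "1 \<le> i \<and> i < j \<and> j \<le> dm c"
    then obtain \<mu> where \<mu>: "\<mu> \<in> Field r" "c \<in> X \<mu>" by blast
    show "d i a (d j b c) = d (j - 1) b (d i a c)"
      using prec_cub[OF P[OF \<mu>(1)] \<mu>(2), of i j a b] ij by blast
  qed
  show ?thesis unfolding precubical_def using A B by blast
qed

lemma tower_prec: "cell_tower r X dm d \<Longrightarrow> \<mu> \<in> Field r \<Longrightarrow> precubical (X \<mu>) dm d"
  unfolding cell_tower_def by blast

lemma ord_less_Field: "ord_less r \<mu> \<nu> \<Longrightarrow> \<mu> \<in> Field r \<and> \<nu> \<in> Field r"
  unfolding ord_less_def by (auto intro: FieldI1 FieldI2)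

lemma tower_mono: "cell_tower r X dm d \<Longrightarrow> ord_less r \<mu> \<nu> \<Longrightarrow> X \<mu> \<subseteq> X \<nu>"
  using ord_less_Field[of r \<mu> \<nu>] unfolding cell_tower_def by blast

lemma tower_lim: "cell_tower r X dm d \<Longrightarrow> \<nu> \<in> Field r \<Longrightarrow> is_limit r \<nu> \<Longrightarrow>
    X \<nu> = (\<Union>\<mu>\<in>{\<mu>. ord_less r \<mu> \<nu>}. X \<mu>)"
  unfolding cell_tower_def by blast

lemma fin_below:
  assumes T: "cell_tower r X dm d" and nu: "\<nu> \<in> Field r" "is_limit r \<nu>"
  shows "finite F \<Longrightarrow> F \<subseteq> X \<nu> \<Longrightarrow> \<exists>\<mu>. ord_less r \<mu> \<nu> \<and> F \<subseteq> X \<mu>"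
proof (induction F rule: finite_induct)
  case empty
  then show ?case using nu(2) unfolding is_limit_def by blast
next
  case (insert a F)
  obtain \<mu>1 where \<mu>1: "ord_less r \<mu>1 \<nu>" "F \<subseteq> X \<mu>1" using insert by blast
  have "a \<in> (\<Union>\<mu>\<in>{\<mu>. ord_less r \<mu> \<nu>}. X \<mu>)" using insert.prems tower_lim[OF T nu] by blast
  then obtain \<mu>2 where \<mu>2: "ord_less r \<mu>2 \<nu>" "a \<in> X \<mu>2" by blast
  have WO: "Well_order r" using T unfolding cell_tower_def by blast
  then have tot: "total_on (Field r) r"
    unfolding well_order_on_def linear_order_on_def by blast
  have F12: "\<mu>1 \<in> Field r" "\<mu>2 \<in> Field r" using ord_less_Field[OF \<mu>1(1)] ord_less_Field[OF \<mu>2(1)] by blast+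
  show ?case
  proof (cases "\<mu>1 = \<mu>2")
    case True then show ?thesis using \<mu>1 \<mu>2 by blast
  next
    case False
    then have "(\<mu>1, \<mu>2) \<in> r \<or> (\<mu>2, \<mu>1) \<in> r" using tot F12 unfolding total_on_def by blast
    then show ?thesis
    proof
      assume "(\<mu>1, \<mu>2) \<in> r"
      then have "ord_less r \<mu>1 \<mu>2" using False unfolding ord_less_def by blast
      then have "X \<mu>1 \<subseteq> X \<mu>2" by (rule tower_mono[OF T])
      then show ?thesis using \<mu>1 \<mu>2 by blast
    next
      assume "(\<mu>2, \<mu>1) \<in> r"
      then have "ord_less r \<mu>2 \<mu>1" using False unfolding ord_less_def by blast
      then have "X \<mu>2 \<subseteq> X \<mu>1" by (rule tower_mono[OF T])
      then show ?thesis using \<mu>1 \<mu>2 by blast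
    qed
  qed
qed



theorem proposition5p4:
  fixes r :: "'i rel" and X :: "'i \<Rightarrow> 'c set" and dm :: "'c \<Rightarrow> nat"
    and d :: "nat \<Rightarrow> bool \<Rightarrow> 'c \<Rightarrow> 'c" and \<epsilon> :: real and \<nu> :: 'i
  assumes "0 < \<epsilon>" and "\<epsilon> < 1"
    and "cell_tower r X dm d"
    and "\<nu> \<in> Field r" and "is_limit r \<nu>"
  shows "homeomorphic_map
           (colim_branching r X (\<Union>\<mu>\<in>Field r. X \<mu>) dm d \<epsilon> \<nu>)
           (branching_space (\<Union>\<mu>\<in>Field r. X \<mu>) (X \<nu>) dm d \<epsilon>) id"
proof -
  note eps = assms(1,2)
  note T = assms(3)
  note nu = assms(4,5)
  define K where "K = (\<Union>\<mu>\<in>Field r. X \<mu>)"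
  have Kp: "precubical K dm d" unfolding K_def by (rule tower_K[OF T])
  have Xnu: "precubical (X \<nu>) dm d" by (rule tower_prec[OF T nu(1)])
  have XnuK: "X \<nu> \<subseteq> K" unfolding K_def using nu(1) by blast
  have Xmu: "precubical (X \<mu>) dm d" if "ord_less r \<mu> \<nu>" for \<mu>
    using tower_prec[OF T] ord_less_Field[OF that] by blast
  have Xmunu: "X \<mu> \<subseteq> X \<nu>" if "ord_less r \<mu> \<nu>" for \<mu> by (rule tower_mono[OF T that])
  have lim: "X \<nu> = (\<Union>\<mu>\<in>{\<mu>. ord_less r \<mu> \<nu>}. X \<mu>)" by (rule tower_lim[OF T nu])
  let ?I = "interval_top \<epsilon>"
  let ?P = "\<lambda>\<mu> \<alpha>. branch_set K (X \<mu>) dm d \<epsilon> \<alpha>"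
  let ?R = "\<lambda>\<mu>. realization K (X \<mu>) dm d"
  let ?BS = "\<lambda>\<mu>. branching_space K (X \<mu>) dm d \<epsilon>"
  have vmono: "verts (X \<mu>) dm \<subseteq> verts (X \<nu>) dm" if "ord_less r \<mu> \<nu>" for \<mu>
    using Xmunu[OF that] unfolding verts_def by blast
  have top_eq: "(\<Union>\<mu>\<in>{\<mu>. ord_less r \<mu> \<nu>}. topspace (?BS \<mu>)) = (\<Union>\<alpha>\<in>verts (X \<nu>) dm. ?P \<nu> \<alpha>)"
  proof (intro equalityI subsetI)
    fix p assume "p \<in> (\<Union>\<mu>\<in>{\<mu>. ord_less r \<mu> \<nu>}. topspace (?BS \<mu>))"
    then obtain \<mu> \<alpha> where \<mu>: "ord_less r \<mu> \<nu>" and \<alpha>: "\<alpha> \<in> verts (X \<mu>) dm" and p: "p \<in> ?P \<mu> \<alpha>"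
      unfolding bs_top by blast
    have "p \<in> ?P \<nu> \<alpha>" using p bs_mono[OF Xmunu[OF \<mu>]] by blast
    then show "p \<in> (\<Union>\<alpha>\<in>verts (X \<nu>) dm. ?P \<nu> \<alpha>)" using \<alpha> vmono[OF \<mu>] by blast
  next
    fix p assume "p \<in> (\<Union>\<alpha>\<in>verts (X \<nu>) dm. ?P \<nu> \<alpha>)"
    then obtain \<alpha> where p: "p \<in> ?P \<nu> \<alpha>" by blast
    obtain c \<phi> where pc: "p = restrict (\<lambda>t. geo_pt K dm d c (\<phi> t)) {0..\<epsilon>}" and c: "c \<in> X \<nu>"
      and c1: "1 \<le> dm c" and iv: "init_vertex dm d c = \<alpha>" and phi: "\<phi> \<in> natural_paths (dm c) \<epsilon>"
      by (rule bs_elem[OF p])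
    obtain \<mu> where \<mu>: "ord_less r \<mu> \<nu>" "c \<in> X \<mu>" using c lim by blast
    have "\<alpha> \<in> verts (X \<mu>) dm" using init_in[OF Xmu[OF \<mu>(1)] \<mu>(2)] iv unfolding verts_def by blast
    moreover have "p \<in> ?P \<mu> \<alpha>" unfolding pc by (rule bs_intro[OF \<mu>(2) c1 iv phi])
    ultimately show "p \<in> (\<Union>\<mu>\<in>{\<mu>. ord_less r \<mu> \<nu>}. topspace (?BS \<mu>))"
      using \<mu>(1) unfolding bs_top by blast
  qed
  have co_of_sub: "continuous_map (simplex_top n) (compact_open ?I (?R \<mu>)) f"
    if "continuous_map (simplex_top n) (subtopology (TOP ?I (?R \<mu>)) (?P \<mu> \<alpha>)) f" for n f \<mu> \<alpha>
    using that unfolding continuous_map_in_subtopology TOP_def by (blast dest: kd_cont_down)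
  have sub_of_co: "continuous_map (simplex_top n) (subtopology (TOP ?I (?R \<mu>)) (?P \<mu> \<alpha>)) f"
    if "continuous_map (simplex_top n) (compact_open ?I (?R \<mu>)) f" "f \<in> topspace (simplex_top n) \<rightarrow> ?P \<mu> \<alpha>"
    for n f \<mu> \<alpha>
    using that kd_cont_simplex unfolding continuous_map_in_subtopology TOP_def by blast
  have mapsP: "f \<in> topspace (simplex_top n) \<rightarrow> ?P \<mu> \<alpha>"
    if "continuous_map (simplex_top n) (subtopology (TOP ?I (?R \<mu>)) (?P \<mu> \<alpha>)) f" for n f \<mu> \<alpha>
    using that unfolding continuous_map_in_subtopology by blast
  have "openin (?BS \<nu>) U \<longleftrightarrow> openin (colim_branching r X K dm d \<epsilon> \<nu>) U" for U
  proof
    assume U: "openin (?BS \<nu>) U"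
    have U1: "U \<subseteq> (\<Union>\<alpha>\<in>verts (X \<nu>) dm. ?P \<nu> \<alpha>)"
      and U2: "\<And>\<alpha>. \<alpha> \<in> verts (X \<nu>) dm \<Longrightarrow> openin (branch_top K (X \<nu>) dm d \<epsilon> \<alpha>) (U \<inter> ?P \<nu> \<alpha>)"
      using U unfolding bs_open by blast+
    show "openin (colim_branching r X K dm d \<epsilon> \<nu>) U"
      unfolding colim_open
    proof (intro conjI allI impI)
      show "U \<subseteq> (\<Union>\<mu>\<in>{\<mu>. ord_less r \<mu> \<nu>}. topspace (?BS \<mu>))" using U1 top_eq by simp
      fix \<mu> assume \<mu>: "ord_less r \<mu> \<nu>"
      show "openin (?BS \<mu>) (U \<inter> topspace (?BS \<mu>))"
        unfolding bs_open
      proof (intro conjI ballI)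
        show "U \<inter> topspace (?BS \<mu>) \<subseteq> (\<Union>\<alpha>\<in>verts (X \<mu>) dm. ?P \<mu> \<alpha>)" unfolding bs_top by blast
        fix \<alpha> assume \<alpha>: "\<alpha> \<in> verts (X \<mu>) dm"
        have eq: "U \<inter> topspace (?BS \<mu>) \<inter> ?P \<mu> \<alpha> = U \<inter> ?P \<mu> \<alpha>" using \<alpha> unfolding bs_top by blast
        show "openin (branch_top K (X \<mu>) dm d \<epsilon> \<alpha>) (U \<inter> topspace (?BS \<mu>) \<inter> ?P \<mu> \<alpha>)"
          unfolding eq branch_top_open
        proof (intro conjI allI impI)
          show "U \<inter> ?P \<mu> \<alpha> \<subseteq> ?P \<mu> \<alpha>" by blast
          fix n f assume f: "continuous_map (simplex_top n) (subtopology (TOP ?I (?R \<mu>)) (?P \<mu> \<alpha>)) f"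
          have fP: "f \<in> topspace (simplex_top n) \<rightarrow> ?P \<mu> \<alpha>" by (rule mapsP[OF f])
          have fco: "continuous_map (simplex_top n) (compact_open ?I (?R \<nu>)) f"
            by (rule co_mono[OF Xmunu[OF \<mu>] co_of_sub[OF f]])
          have fP2: "f \<in> topspace (simplex_top n) \<rightarrow> ?P \<nu> \<alpha>" using fP bs_mono[OF Xmunu[OF \<mu>]] by blast
          have f2: "continuous_map (simplex_top n) (subtopology (TOP ?I (?R \<nu>)) (?P \<nu> \<alpha>)) f"
            by (rule sub_of_co[OF fco fP2])
          have "openin (branch_top K (X \<nu>) dm d \<epsilon> \<alpha>) (U \<inter> ?P \<nu> \<alpha>)" using U2 \<alpha> vmono[OF \<mu>] by blast
          then have "openin (simplex_top n) {x \<in> topspace (simplex_top n). f x \<in> U \<inter> ?P \<nu> \<alpha>}"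
            using f2 unfolding branch_top_open by blast
          moreover have "{x \<in> topspace (simplex_top n). f x \<in> U \<inter> ?P \<nu> \<alpha>} = {x \<in> topspace (simplex_top n). f x \<in> U \<inter> ?P \<mu> \<alpha>}"
            using fP fP2 by blast
          ultimately show "openin (simplex_top n) {x \<in> topspace (simplex_top n). f x \<in> U \<inter> ?P \<mu> \<alpha>}" by simp
        qed
      qed
    qed
  next
    assume U: "openin (colim_branching r X K dm d \<epsilon> \<nu>) U"
    have U1: "U \<subseteq> (\<Union>\<mu>\<in>{\<mu>. ord_less r \<mu> \<nu>}. topspace (?BS \<mu>))"
      and U2: "\<And>\<mu>. ord_less r \<mu> \<nu> \<Longrightarrow> openin (?BS \<mu>) (U \<inter> topspace (?BS \<mu>))"
      using U unfolding colim_open by blast+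
    show "openin (?BS \<nu>) U"
      unfolding bs_open
    proof (intro conjI ballI)
      show "U \<subseteq> (\<Union>\<alpha>\<in>verts (X \<nu>) dm. ?P \<nu> \<alpha>)" using U1 top_eq by simp
      fix \<alpha> assume \<alpha>: "\<alpha> \<in> verts (X \<nu>) dm"
      show "openin (branch_top K (X \<nu>) dm d \<epsilon> \<alpha>) (U \<inter> ?P \<nu> \<alpha>)"
        unfolding branch_top_open
      proof (intro conjI allI impI)
        show "U \<inter> ?P \<nu> \<alpha> \<subseteq> ?P \<nu> \<alpha>" by blast
        fix n f assume f: "continuous_map (simplex_top n) (subtopology (TOP ?I (?R \<nu>)) (?P \<nu> \<alpha>)) f"
        have fP: "f \<in> topspace (simplex_top n) \<rightarrow> ?P \<nu> \<alpha>" by (rule mapsP[OF f])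
        have fco: "continuous_map (simplex_top n) (compact_open ?I (?R \<nu>)) f" by (rule co_of_sub[OF f])
        define E where "E = (\<lambda>x. f x \<epsilon>) ` topspace (simplex_top n)"
        have epsI: "\<epsilon> \<in> topspace ?I" using eps by simp
        have ev: "continuous_map (simplex_top n) (?R \<nu>) (\<lambda>x. f x \<epsilon>)"
          unfolding continuous_map_def
        proof (intro conjI allI impI)
          show "(\<lambda>x. f x \<epsilon>) \<in> topspace (simplex_top n) \<rightarrow> topspace (?R \<nu>)"
            using co_cont_pts(1)[OF fco] epsI continuous_map_image_subset_topspace by blast
          fix W assume W: "openin (?R \<nu>) W"
          have "{x \<in> topspace (simplex_top n). f x \<epsilon> \<in> W} = {x \<in> topspace (simplex_top n). f x ` {\<epsilon>} \<subseteq> W}"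
            by auto
          moreover have "openin (simplex_top n) {x \<in> topspace (simplex_top n). f x ` {\<epsilon>} \<subseteq> W}"
            by (rule co_preimage_open[OF fco _ W]) (use epsI in simp)
          ultimately show "openin (simplex_top n) {x \<in> topspace (simplex_top n). f x \<epsilon> \<in> W}" by simp
        qed
        have cs: "compact_space (simplex_top n)"
          unfolding simplex_top_def by (rule compact_space_subtopology[OF compactin_standard_simplex])
        have Ecomp: "compactin (?R \<nu>) E"
          unfolding E_def by (rule image_compactin[OF _ ev]) (use cs in \<open>simp add: compact_space_def\<close>)
        have Efin: "finite (car dm d ` E)" by (rule fin_car[OF Kp Ecomp])
        have EX: "car dm d ` E \<subseteq> X \<nu>"
        proof
          fix z assume "z \<in> car dm d ` E"
          then obtain e where e: "e \<in> E" "z = car dm d e" by blast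
          have "e \<in> pts K (X \<nu>) dm d" using compactin_subset_topspace[OF Ecomp] e(1)
            unfolding topspace_realization by blast
          then obtain c y where cy: "c \<in> X \<nu>" "e = geo_pt K dm d c y" unfolding pts_def by blast
          have "z = fst (nf d (dm c) c y)" using e(2) cy(2) car_geo[OF Kp] by simp
          then show "z \<in> X \<nu>" using nf_in[OF Xnu cy(1)] by simp
        qed
        have \<alpha>X: "\<alpha> \<in> X \<nu>" "dm \<alpha> = 0" using \<alpha> unfolding verts_def by auto
        obtain \<mu> where \<mu>: "ord_less r \<mu> \<nu>" "insert \<alpha> (car dm d ` E) \<subseteq> X \<mu>"
          using fin_below[OF T nu, of "insert \<alpha> (car dm d ` E)"] Efin EX \<alpha>X by blast
        have fPmu: "f x \<in> ?P \<mu> \<alpha>" if x: "x \<in> topspace (simplex_top n)" for x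
        proof -
          have "f x \<in> ?P \<nu> \<alpha>" using fP x by blast
          then obtain c \<phi> where pc: "f x = restrict (\<lambda>t. geo_pt K dm d c (\<phi> t)) {0..\<epsilon>}" and c: "c \<in> X \<nu>"
            and c1: "1 \<le> dm c" and iv: "init_vertex dm d c = \<alpha>" and phi: "\<phi> \<in> natural_paths (dm c) \<epsilon>"
            by (rule bs_elem)
          obtain c' \<phi>' where c': "c' \<in> X \<nu>" "1 \<le> dm c'" "init_vertex dm d c' = init_vertex dm d c"
            "\<phi>' \<in> natural_paths (dm c') \<epsilon>" "\<forall>j. \<not> bd (dm c') (\<phi>' \<epsilon>) j"
            "restrict (\<lambda>t. geo_pt K dm d c (\<phi> t)) {0..\<epsilon>} = restrict (\<lambda>t. geo_pt K dm d c' (\<phi>' t)) {0..\<epsilon>}"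
            using norm_rep[OF Xnu XnuK eps c refl c1 phi] by blast
          have fx: "f x = restrict (\<lambda>t. geo_pt K dm d c' (\<phi>' t)) {0..\<epsilon>}" using pc c'(6) by simp
          have "f x \<epsilon> = geo_pt K dm d c' (\<phi>' \<epsilon>)" using fx eps by simp
          then have "car dm d (f x \<epsilon>) = fst (nf d (dm c') c' (\<phi>' \<epsilon>))" using car_geo[OF Kp] by simp
          also have "\<dots> = c'" using nf_interior[of "dm c'" "\<phi>' \<epsilon>" d c'] c'(5) by simp
          finally have "c' \<in> car dm d ` E" unfolding E_def using x by (metis image_eqI)
          then have "c' \<in> X \<mu>" using \<mu>(2) by blast
          then show ?thesis unfolding fx using bs_intro[of c' "X \<mu>" dm d \<alpha> \<phi>' \<epsilon> K] c' iv by simp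
        qed
        have fco_mu: "continuous_map (simplex_top n) (compact_open ?I (?R \<mu>)) f"
          by (rule co_restrict[OF Kp Xmu[OF \<mu>(1)] Xmunu[OF \<mu>(1)] XnuK fco]) (rule bs_cont[OF fPmu])
        have fmu: "continuous_map (simplex_top n) (subtopology (TOP ?I (?R \<mu>)) (?P \<mu> \<alpha>)) f"
          by (rule sub_of_co[OF fco_mu]) (use fPmu in blast)
        have \<alpha>mu: "\<alpha> \<in> verts (X \<mu>) dm" using \<mu>(2) \<alpha>X unfolding verts_def by blast
        have "openin (?BS \<mu>) (U \<inter> topspace (?BS \<mu>))" by (rule U2[OF \<mu>(1)])
        then have "openin (branch_top K (X \<mu>) dm d \<epsilon> \<alpha>) (U \<inter> topspace (?BS \<mu>) \<inter> ?P \<mu> \<alpha>)"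
          using \<alpha>mu unfolding bs_open by blast
        moreover have "U \<inter> topspace (?BS \<mu>) \<inter> ?P \<mu> \<alpha> = U \<inter> ?P \<mu> \<alpha>" using \<alpha>mu unfolding bs_top by blast
        ultimately have "openin (branch_top K (X \<mu>) dm d \<epsilon> \<alpha>) (U \<inter> ?P \<mu> \<alpha>)" by simp
        then have "openin (simplex_top n) {x \<in> topspace (simplex_top n). f x \<in> U \<inter> ?P \<mu> \<alpha>}"
          using fmu unfolding branch_top_open by blast
        moreover have "{x \<in> topspace (simplex_top n). f x \<in> U \<inter> ?P \<nu> \<alpha>} = {x \<in> topspace (simplex_top n). f x \<in> U \<inter> ?P \<mu> \<alpha>}"
          using fP fPmu by blast
        ultimately show "openin (simplex_top n) {x \<in> topspace (simplex_top n). f x \<in> U \<inter> ?P \<nu> \<alpha>}" by simp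
      qed
    qed
  qed
  then have "colim_branching r X K dm d \<epsilon> \<nu> = ?BS \<nu>" by (simp add: topology_eq)
  then show ?thesis unfolding K_def by simp
qed



end
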